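(* Let $X$ be a complete nonsingular toric variety with fan $\Delta$. The following are equivalent: (i) $X$ is Fano, and every toric subvariety of $X$ is Fano; (ii) for every primitive set $\{D_1,\ldots,D_k\}$, either $\rho_1+\cdots+\rho_k=0$ or $\rho_1+\cdots+\rho_k=\rho'$ for some ray generator $\rho'$ of $\Delta$; (iii) for every maximal cone $\mu=\langle\rho_1,\ldots,\rho_n\rangle$ of $\Delta$ and every ray generator $\rho$, writing $\rho=b_1\rho_1+\cdots+b_n\rho_n$, we have $-1\le b_j\le1$ for all $j$, with $b_j=1$ for at most one $j$.
   Context: $\Delta$ is a complete fan in $N_{\mathbb R}$, $N\cong\mathbb{Z}^n$, each cone generated by part of a $\mathbb{Z}$-basis. Each ray has a primitive generator $\rho$ (ray generator) and corresponding toric divisor $D$; toric divisors meet iff their ray generators span a cone. A toric subvariety is a torus-orbit closure $X(\sigma)$, $\sigma\in\Delta$. A primitive set is a set $\{D_1,\ldots,D_k\}$ of toric divisors with $D_1\cap\cdots\cap D_k=\emptyset$ but every proper subset having nonempty intersection. *)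

theory Defs
  imports "HOL-Analysis.Analysis"
begin

text \<open>The lattice N = Z^n is modelled as the integral points of real^'n.
  A simplicial fan is given by its finite set R of ray generators and the
  set C of its cones, each cone being represented by its set of ray generators.\<close>

definition integral_vec :: "real^'n \<Rightarrow> bool" where
  "integral_vec v \<longleftrightarrow> (\<forall>i. v $ i \<in> \<int>)"

definition zbasis :: "(real^'n) set \<Rightarrow> bool" where
  "zbasis B \<longleftrightarrow> finite B \<and> card B = CARD('n) \<and> independent B \<and>
     (\<forall>b\<in>B. integral_vec b) \<and>
     (\<forall>v. integral_vec v \<longrightarrow> (\<exists>c :: real^'n \<Rightarrow> int. v = (\<Sum>b\<in>B. of_int (c b) *\<^sub>R b)))"

definition pos_cone :: "(real^'n) set \<Rightarrow> (real^'n) set" where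
  "pos_cone S = {x. \<exists>c. (\<forall>s\<in>S. c s \<ge> 0) \<and> x = (\<Sum>s\<in>S. c s *\<^sub>R s)}"

definition complete_nonsingular_fan :: "(real^'n) set \<Rightarrow> (real^'n) set set \<Rightarrow> bool" where
  "complete_nonsingular_fan R C \<longleftrightarrow>
     finite R \<and> C \<subseteq> Pow R \<and> {} \<in> C \<and>
     (\<forall>S\<in>C. \<forall>T. T \<subseteq> S \<longrightarrow> T \<in> C) \<and>
     (\<forall>\<rho>\<in>R. {\<rho>} \<in> C) \<and>
     (\<forall>S\<in>C. \<exists>B. S \<subseteq> B \<and> zbasis B) \<and>
     (\<forall>S\<in>C. \<forall>T\<in>C. pos_cone S \<inter> pos_cone T = pos_cone (S \<inter> T)) \<and>
     (\<Union>S\<in>C. pos_cone S) = UNIV"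

definition maximal_cone :: "(real^'n) set set \<Rightarrow> (real^'n) set \<Rightarrow> bool" where
  "maximal_cone C \<mu> \<longleftrightarrow> \<mu> \<in> C \<and> (\<forall>S\<in>C. \<mu> \<subseteq> S \<longrightarrow> S = \<mu>)"

text \<open>Toric divisors D_1..D_k have nonempty intersection iff their ray
  generators span a cone; a primitive set is thus a set of rays that is not a cone
  while all its proper subsets are cones.\<close>
definition primitive_set :: "(real^'n) set \<Rightarrow> (real^'n) set set \<Rightarrow> (real^'n) set \<Rightarrow> bool" where
  "primitive_set R C P \<longleftrightarrow> P \<subseteq> R \<and> P \<notin> C \<and> (\<forall>Q. Q \<subset> P \<longrightarrow> Q \<in> C)"

text \<open>Fano property of the toric subvariety X(sigma) (orbit closure), whose fan is
  Star(sigma) in N(sigma) = N / N_sigma. Its rays are the images of the rays rho with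
  sigma \<union> {rho} a cone (rho not in sigma), its maximal cones are the images of the
  maximal cones mu containing sigma. By the toric ampleness criterion, -K is ample iff
  the support function is strictly convex: for every maximal cone mu \<supseteq> sigma, the
  linear form m on N(sigma) (i.e. m on N vanishing on sigma) with m = 1 on the rays of
  mu outside sigma satisfies m(rho) < 1 for every other ray rho of Star(sigma).
  For sigma = {} this is the Fano property of X itself.\<close>
definition fano_orbit_closure :: "(real^'n) set \<Rightarrow> (real^'n) set set \<Rightarrow> (real^'n) set \<Rightarrow> bool" where
  "fano_orbit_closure R C \<sigma> \<longleftrightarrow>
     (\<forall>\<mu>. maximal_cone C \<mu> \<and> \<sigma> \<subseteq> \<mu> \<longrightarrow>
       (\<forall>m :: real^'n. (\<forall>r\<in>\<sigma>. m \<bullet> r = 0) \<and> (\<forall>r\<in>\<mu> - \<sigma>. m \<bullet> r = 1) \<longrightarrow>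
         (\<forall>\<rho>\<in>R. insert \<rho> \<sigma> \<in> C \<and> \<rho> \<notin> \<mu> \<longrightarrow> m \<bullet> \<rho> < 1)))"

definition fano_fan :: "(real^'n) set \<Rightarrow> (real^'n) set set \<Rightarrow> bool" where
  "fano_fan R C \<longleftrightarrow> fano_orbit_closure R C {}"

end

theory Submission
  imports Defs
begin


lemma indep_unique:
  fixes S :: "(real^'n) set"
  assumes "finite S" "independent S" "(\<Sum>s\<in>S. c s *\<^sub>R s) = (\<Sum>s\<in>S. d s *\<^sub>R s)" "s \<in> S"
  shows "c s = d s"
proof (rule ccontr)
  assume ne: "c s \<noteq> d s"
  have "(\<Sum>t\<in>S. (c t - d t) *\<^sub>R t) = 0"
    using assms(3) by (simp add: scaleR_diff_left sum_subtractf)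
  then have "dependent S" unfolding dependent_finite[OF assms(1)]
    by (intro exI[of _ "\<lambda>t. c t - d t"]) (use ne assms(4) in auto)
  then show False using assms(2) by simp
qed

definition co :: "(real^'n) set \<Rightarrow> real^'n \<Rightarrow> real^'n \<Rightarrow> real" where
  "co S v = (SOME c. v = (\<Sum>s\<in>S. c s *\<^sub>R s))"

lemma co_eq:
  fixes S :: "(real^'n) set"
  assumes "finite S" "v \<in> span S"
  shows "v = (\<Sum>s\<in>S. co S v s *\<^sub>R s)"
proof -
  from assms span_finite[OF assms(1)] have "\<exists>c. v = (\<Sum>s\<in>S. c s *\<^sub>R s)" by auto
  from someI_ex[OF this] show ?thesis unfolding co_def .
qed

lemma co_unique:
  fixes S :: "(real^'n) set"
  assumes "finite S" "independent S" "v = (\<Sum>s\<in>S. c s *\<^sub>R s)" "s \<in> S"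
  shows "co S v s = c s"
proof -
  have "v \<in> span S" using assms(3) by (simp add: span_sum span_scale span_base)
  then have "(\<Sum>s\<in>S. co S v s *\<^sub>R s) = (\<Sum>s\<in>S. c s *\<^sub>R s)" using co_eq assms by metis
  then show ?thesis using indep_unique assms by blast
qed

lemma co_span_sum:
  fixes S :: "(real^'n) set"
  shows "(\<Sum>s\<in>S. c s *\<^sub>R s) \<in> span S"
  by (simp add: span_sum span_scale span_base)

lemma co_lin:
  fixes S :: "(real^'n) set"
  assumes "finite S" "independent S" "u \<in> span S" "w \<in> span S" "s \<in> S"
  shows "co S (a *\<^sub>R u + b *\<^sub>R w) s = a * co S u s + b * co S w s"
proof -
  have "a *\<^sub>R u + b *\<^sub>R w = a *\<^sub>R (\<Sum>s\<in>S. co S u s *\<^sub>R s) + b *\<^sub>R (\<Sum>s\<in>S. co S w s *\<^sub>R s)"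
    using co_eq[OF assms(1,3)] co_eq[OF assms(1,4)] by simp
  also have "\<dots> = (\<Sum>s\<in>S. (a * co S u s + b * co S w s) *\<^sub>R s)"
    by (simp add: scaleR_sum_right scaleR_add_left sum.distrib)
  finally show ?thesis by (rule co_unique[OF assms(1,2) _ assms(5)])
qed

lemma co_basis:
  fixes S :: "(real^'n) set"
  assumes "finite S" "independent S" "t \<in> S" "s \<in> S"
  shows "co S t s = (if s = t then 1 else 0)"
proof -
  have "(\<Sum>s\<in>S. (if s = t then 1 else 0) *\<^sub>R s) = (\<Sum>s\<in>S. if s = t then t else 0)"
    by (rule sum.cong) auto
  also have "\<dots> = t" using assms(1,3) by simp
  finally have "t = (\<Sum>s\<in>S. (if s = t then 1 else 0) *\<^sub>R s)" by simp
  then show ?thesis by (rule co_unique[OF assms(1,2) _ assms(4)])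
qed

lemma co_zero:
  fixes S :: "(real^'n) set"
  assumes "finite S" "independent S" "s \<in> S"
  shows "co S 0 s = 0"
proof -
  have "(0::real^'n) = (\<Sum>s\<in>S. 0 *\<^sub>R s)" by simp
  then show ?thesis by (rule co_unique[OF assms(1,2) _ assms(3)])
qed

lemma co_sum:
  fixes S :: "(real^'n) set"
  assumes "finite S" "independent S" "s \<in> S" "finite F" "\<forall>t\<in>F. g t \<in> span S"
  shows "co S (\<Sum>t\<in>F. g t) s = (\<Sum>t\<in>F. co S (g t) s)"
  using assms(4,5)
proof (induction F rule: finite_induct)
  case empty
  then show ?case using co_zero assms by simp
next
  case (insert x F)
  have "co S (1 *\<^sub>R g x + 1 *\<^sub>R (\<Sum>t\<in>F. g t)) s = 1 * co S (g x) s + 1 * co S (\<Sum>t\<in>F. g t) s"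
    by (rule co_lin) (use assms insert in \<open>auto intro: span_sum\<close>)
  then show ?case using insert by simp
qed

lemma pos_cone_mono:
  fixes S :: "(real^'n) set"
  assumes "finite T" "S \<subseteq> T"
  shows "pos_cone S \<subseteq> pos_cone T"
proof
  fix x assume "x \<in> pos_cone S"
  then obtain c where c: "\<forall>s\<in>S. c s \<ge> 0" "x = (\<Sum>s\<in>S. c s *\<^sub>R s)" unfolding pos_cone_def by auto
  have "(\<Sum>s\<in>T. (if s \<in> S then c s else 0) *\<^sub>R s) = (\<Sum>s\<in>S. c s *\<^sub>R s)"
    by (rule sum.mono_neutral_cong_right) (use assms in auto)
  then show "x \<in> pos_cone T" unfolding pos_cone_def using c
    by (intro CollectI exI[of _ "\<lambda>s. if s \<in> S then c s else 0"]) auto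
qed

lemma pos_cone_span:
  fixes S :: "(real^'n) set"
  shows "pos_cone S \<subseteq> span S"
  unfolding pos_cone_def using co_span_sum by blast

lemma pos_cone_co:
  fixes S :: "(real^'n) set"
  assumes "finite S" "independent S" "v \<in> pos_cone S" "s \<in> S"
  shows "co S v s \<ge> 0"
proof -
  from assms(3) obtain c where c: "\<forall>s\<in>S. c s \<ge> 0" "v = (\<Sum>s\<in>S. c s *\<^sub>R s)" unfolding pos_cone_def by auto
  then show ?thesis using co_unique[OF assms(1,2) c(2) assms(4)] assms(4) by simp
qed

lemma pos_cone_coI:
  fixes S :: "(real^'n) set"
  assumes "finite S" "v \<in> span S" "\<forall>s\<in>S. co S v s \<ge> 0"
  shows "v \<in> pos_cone S"
  unfolding pos_cone_def using co_eq[OF assms(1,2)] assms(3) by blast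


locale cnf =
  fixes R :: "(real^'n) set" and C :: "(real^'n) set set"
  assumes fan: "complete_nonsingular_fan R C"
begin

lemma F: "finite R" "C \<subseteq> Pow R" "{} \<in> C" "\<forall>S\<in>C. \<forall>T. T \<subseteq> S \<longrightarrow> T \<in> C"
  "\<forall>\<rho>\<in>R. {\<rho>} \<in> C" "\<forall>S\<in>C. \<exists>B. S \<subseteq> B \<and> zbasis B"
  "\<forall>S\<in>C. \<forall>T\<in>C. pos_cone S \<inter> pos_cone T = pos_cone (S \<inter> T)"
  "(\<Union>S\<in>C. pos_cone S) = UNIV"
  using fan unfolding complete_nonsingular_fan_def by simp_all

lemma finR: "finite R" using F by simp
lemma CR: "S \<in> C \<Longrightarrow> S \<subseteq> R" using F(2) by auto
lemma finC: "finite C" using F(1,2) finite_Pow_iff finite_subset by metis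
lemma C_empty: "{} \<in> C" using F by simp
lemma C_sub: "S \<in> C \<Longrightarrow> T \<subseteq> S \<Longrightarrow> T \<in> C" using F(4) by blast
lemma C_ray: "\<rho> \<in> R \<Longrightarrow> {\<rho>} \<in> C" using F(5) by blast
lemma C_basis: "S \<in> C \<Longrightarrow> \<exists>B. S \<subseteq> B \<and> zbasis B" using F(6) by blast
lemma C_int: "S \<in> C \<Longrightarrow> T \<in> C \<Longrightarrow> pos_cone S \<inter> pos_cone T = pos_cone (S \<inter> T)"
  using F(7) by blast
lemma C_cover: "\<exists>T\<in>C. x \<in> pos_cone T"
proof -
  have "x \<in> (\<Union>S\<in>C. pos_cone S)" using F(8) by simp
  then show ?thesis by blast
qed
lemma C_fin: "S \<in> C \<Longrightarrow> finite S" using CR finR finite_subset by blast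
lemma C_indep: "S \<in> C \<Longrightarrow> independent S"
proof -
  assume "S \<in> C"
  then obtain B where "S \<subseteq> B" "zbasis B" using C_basis by blast
  then show ?thesis unfolding zbasis_def using independent_mono by blast
qed
lemma R_int: "\<rho> \<in> R \<Longrightarrow> integral_vec \<rho>"
  using C_basis[OF C_ray] unfolding zbasis_def by blast

lemma vanish:
  assumes "S \<in> C" "A \<in> C" "v \<in> pos_cone S" "v \<in> pos_cone A" "s \<in> S" "s \<notin> A"
  shows "co S v s = 0"
proof -
  have "v \<in> pos_cone (S \<inter> A)" using C_int[OF assms(1,2)] assms(3,4) by blast
  then obtain d where d: "v = (\<Sum>t\<in>S \<inter> A. d t *\<^sub>R t)" unfolding pos_cone_def by auto
  have "(\<Sum>t\<in>S. (if t \<in> A then d t else 0) *\<^sub>R t) = (\<Sum>t\<in>S \<inter> A. d t *\<^sub>R t)"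
    by (rule sum.mono_neutral_cong_right) (use C_fin[OF assms(1)] in auto)
  then have "co S v s = (if s \<in> A then d s else 0)"
    using co_unique[OF C_fin[OF assms(1)] C_indep[OF assms(1)] _ assms(5), of v "\<lambda>t. if t \<in> A then d t else 0"] d by simp
  then show ?thesis using assms(6) by simp
qed

lemma support:
  assumes "\<sigma> \<in> C" "T \<in> C" "x \<in> pos_cone T" "x = (\<Sum>s\<in>\<sigma>. c s *\<^sub>R s)" "\<forall>s\<in>\<sigma>. c s > 0"
  shows "\<sigma> \<subseteq> T"
proof
  fix s assume s: "s \<in> \<sigma>"
  have xin: "x \<in> pos_cone \<sigma>" unfolding pos_cone_def using assms(4,5) less_imp_le by blast
  have "co \<sigma> x s = c s" using co_unique[OF C_fin[OF assms(1)] C_indep[OF assms(1)] assms(4) s] .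
  then show "s \<in> T" using vanish[OF assms(1,2) xin assms(3) s] assms(5) s by force
qed

lemma exists_max:
  assumes "S \<in> C"
  shows "\<exists>\<mu>. maximal_cone C \<mu> \<and> S \<subseteq> \<mu>"
proof -
  define F where "F = {T\<in>C. S \<subseteq> T}"
  have finF: "finite F" using finC unfolding F_def by auto
  have "S \<in> F" using assms unfolding F_def by auto
  then have ne: "card ` F \<noteq> {}" by auto
  obtain \<mu> where mu: "\<mu> \<in> F" "card \<mu> = Max (card ` F)"
    using Max_in[OF finite_imageI[OF finF] ne] by auto
  have "maximal_cone C \<mu>" unfolding maximal_cone_def
  proof (intro conjI ballI impI)
    show "\<mu> \<in> C" using mu unfolding F_def by auto
    fix T assume T: "T \<in> C" "\<mu> \<subseteq> T"
    then have "T \<in> F" using mu unfolding F_def by auto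
    then have "card T \<le> card \<mu>" using mu finF by simp
    moreover have "card \<mu> \<le> card T" using card_mono[OF C_fin[OF T(1)] T(2)] .
    ultimately show "T = \<mu>" using card_subset_eq[OF C_fin[OF T(1)] T(2)] by simp
  qed
  then show ?thesis using mu unfolding F_def by auto
qed

end


lemma co_scale:
  fixes S :: "(real^'n) set"
  assumes "finite S" "independent S" "u \<in> span S" "s \<in> S"
  shows "co S (a *\<^sub>R u) s = a * co S u s"
  using co_lin[OF assms(1,2,3,3,4), of a 0] by simp

lemma co_add:
  fixes S :: "(real^'n) set"
  assumes "finite S" "independent S" "u \<in> span S" "w \<in> span S" "s \<in> S"
  shows "co S (u + w) s = co S u s + co S w s"
  using co_lin[OF assms, of 1 1] by simp

lemma co_diff:
  fixes S :: "(real^'n) set"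
  assumes "finite S" "independent S" "u \<in> span S" "w \<in> span S" "s \<in> S"
  shows "co S (u - w) s = co S u s - co S w s"
  using co_lin[OF assms, of 1 "-1"] by simp

lemma int_prod_one:
  fixes a b :: real
  assumes "a \<in> \<int>" "b \<in> \<int>" "a * b = 1"
  shows "b = 1 \<or> b = -1"
proof -
  obtain i j where ij: "a = of_int i" "b = of_int j" using assms(1,2) Ints_cases by metis
  then have "i * j = 1" using assms(3) by (metis of_int_eq_1_iff of_int_mult)
  then have "j = 1 \<or> j = -1" using zmult_eq_1_iff by blast
  then show ?thesis using ij by auto
qed

context cnf begin

lemma max_C: "maximal_cone C \<mu> \<Longrightarrow> \<mu> \<in> C" unfolding maximal_cone_def by blast
lemma max_eq: "maximal_cone C \<mu> \<Longrightarrow> S \<in> C \<Longrightarrow> \<mu> \<subseteq> S \<Longrightarrow> S = \<mu>" unfolding maximal_cone_def by blast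

lemma local_cover:
  "\<exists>T\<in>C. x \<in> pos_cone T \<and> (\<exists>e>0. x + e *\<^sub>R v \<in> pos_cone T)"
proof -
  define e where "e = (\<lambda>k::nat. 1 / (real k + 1))"
  have "\<forall>k. \<exists>T. T \<in> C \<and> x + e k *\<^sub>R v \<in> pos_cone T" using C_cover by blast
  then obtain f where f: "\<And>k. f k \<in> C \<and> x + e k *\<^sub>R v \<in> pos_cone (f k)" by metis
  have fin: "finite (range f)" using f finC by (meson finite_subset image_subsetI)
  obtain T where T: "T \<in> range f" "infinite (f -` {T})"
    using inf_img_fin_domE[OF fin infinite_UNIV_nat] by blast
  define K where "K = f -` {T}"
  have TC: "T \<in> C" using T f by auto
  have yK: "\<And>k. k \<in> K \<Longrightarrow> x + e k *\<^sub>R v \<in> pos_cone T" using f unfolding K_def by auto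
  have unb: "\<forall>m. \<exists>k>m. k \<in> K" using T(2) infinite_nat_iff_unbounded unfolding K_def by auto
  obtain k1 where k1: "k1 \<in> K" using unb by blast
  obtain k2 where k2: "k2 > k1" "k2 \<in> K" using unb by blast
  have finT: "finite T" and indT: "independent T" using C_fin C_indep TC by auto
  have y1: "x + e k1 *\<^sub>R v \<in> span T" using yK[OF k1] pos_cone_span by blast
  have y2: "x + e k2 *\<^sub>R v \<in> span T" using yK[OF k2(2)] pos_cone_span by blast
  have "(x + e k1 *\<^sub>R v) - (x + e k2 *\<^sub>R v) \<in> span T" using y1 y2 span_diff by blast
  then have d: "(e k1 - e k2) *\<^sub>R v \<in> span T" by (simp add: scaleR_diff_left)
  have "e k1 \<noteq> e k2" using k2(1) unfolding e_def by (simp add: divide_simps)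
  then have vT: "v \<in> span T"
    using span_scale[OF d, of "inverse (e k1 - e k2)"] by simp
  have xT: "x \<in> span T"
  proof -
    have "(x + e k1 *\<^sub>R v) - e k1 *\<^sub>R v \<in> span T" using y1 vT span_diff span_scale by blast
    then show ?thesis by simp
  qed
  have nonneg: "\<forall>s\<in>T. co T x s \<ge> 0"
  proof
    fix s assume sT: "s \<in> T"
    show "co T x s \<ge> 0"
    proof (rule ccontr)
      assume "\<not> co T x s \<ge> 0"
      then have neg: "co T x s < 0" by simp
      obtain m :: nat where m: "\<bar>co T v s\<bar> / (- co T x s) < real m" using reals_Archimedean2 by blast
      obtain k where k: "k > m" "k \<in> K" using unb by blast
      have "co T (x + e k *\<^sub>R v) s \<ge> 0" using pos_cone_co[OF finT indT yK[OF k(2)] sT] .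
      moreover have "co T (1 *\<^sub>R x + e k *\<^sub>R v) s = 1 * co T x s + e k * co T v s"
        using co_lin[OF finT indT xT vT sT] .
      ultimately have A: "co T x s + e k * co T v s \<ge> 0" by simp
      have "\<bar>co T v s\<bar> < real m * (- co T x s)" using m neg by (simp add: divide_simps)
      also have "\<dots> \<le> (real k + 1) * (- co T x s)" using k(1) neg
        by (intro mult_right_mono) auto
      finally have "\<bar>co T v s\<bar> / (real k + 1) < - co T x s" by (simp add: divide_simps mult.commute)
      then have "e k * \<bar>co T v s\<bar> < - co T x s" unfolding e_def by simp
      moreover have "e k * co T v s \<le> e k * \<bar>co T v s\<bar>" unfolding e_def
        by (intro mult_left_mono) auto
      ultimately show False using A by linarith
    qed
  qed
  have "x \<in> pos_cone T" using pos_cone_coI[OF finT xT nonneg] .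
  moreover have "e k1 > 0" unfolding e_def by simp
  ultimately show ?thesis using TC yK[OF k1] by blast
qed

lemma max_span:
  assumes "maximal_cone C \<mu>"
  shows "span \<mu> = UNIV"
proof (rule ccontr)
  assume "span \<mu> \<noteq> UNIV"
  then obtain v where v: "v \<notin> span \<mu>" by blast
  define p where "p = (\<Sum>s\<in>\<mu>. (1::real) *\<^sub>R s)"
  obtain T e where T: "T \<in> C" "p \<in> pos_cone T" "e > 0" "p + e *\<^sub>R v \<in> pos_cone T"
    using local_cover by blast
  have "\<mu> \<subseteq> T" using support[OF max_C[OF assms] T(1,2) p_def] by simp
  then have "T = \<mu>" using max_eq[OF assms T(1)] by simp
  then have "p + e *\<^sub>R v \<in> span \<mu>" using T(4) pos_cone_span by blast
  moreover have "p \<in> span \<mu>" unfolding p_def by (rule co_span_sum)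
  ultimately have "(p + e *\<^sub>R v) - p \<in> span \<mu>" using span_diff by blast
  then have "e *\<^sub>R v \<in> span \<mu>" by simp
  then have "inverse e *\<^sub>R (e *\<^sub>R v) \<in> span \<mu>" using span_scale by blast
  then show False using v T(3) by simp
qed

lemma max_fin: "maximal_cone C \<mu> \<Longrightarrow> finite \<mu>" using C_fin max_C by blast
lemma max_indep: "maximal_cone C \<mu> \<Longrightarrow> independent \<mu>" using C_indep max_C by blast

lemma max_card:
  assumes "maximal_cone C \<mu>"
  shows "card \<mu> = CARD('n)"
proof -
  have "dim (span \<mu>) = card \<mu>" using dim_span_eq_card_independent[OF max_indep[OF assms]] .
  then show ?thesis using max_span[OF assms] by (simp add: dim_UNIV)
qed

lemma max_zbasis:
  assumes "maximal_cone C \<mu>"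
  shows "zbasis \<mu>"
proof -
  obtain B where B: "\<mu> \<subseteq> B" "zbasis B" using C_basis[OF max_C[OF assms]] by blast
  have "finite B" "card B = CARD('n)" using B(2) unfolding zbasis_def by auto
  then have "\<mu> = B" using card_subset_eq[OF _ B(1)] max_card[OF assms] by simp
  then show ?thesis using B by simp
qed

lemma mco_eq: "maximal_cone C \<mu> \<Longrightarrow> v = (\<Sum>s\<in>\<mu>. co \<mu> v s *\<^sub>R s)"
  using co_eq[OF max_fin] max_span by blast

lemma mco_unique: "maximal_cone C \<mu> \<Longrightarrow> v = (\<Sum>s\<in>\<mu>. c s *\<^sub>R s) \<Longrightarrow> s \<in> \<mu> \<Longrightarrow> co \<mu> v s = c s"
  using co_unique[OF max_fin max_indep] by blast

lemma mco_lin: "maximal_cone C \<mu> \<Longrightarrow> s \<in> \<mu> \<Longrightarrow> co \<mu> (a *\<^sub>R u + b *\<^sub>R w) s = a * co \<mu> u s + b * co \<mu> w s"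
  using co_lin[OF max_fin max_indep] max_span by blast
lemma mco_add: "maximal_cone C \<mu> \<Longrightarrow> s \<in> \<mu> \<Longrightarrow> co \<mu> (u + w) s = co \<mu> u s + co \<mu> w s"
  using mco_lin[of \<mu> s 1 u 1 w] by simp
lemma mco_diff: "maximal_cone C \<mu> \<Longrightarrow> s \<in> \<mu> \<Longrightarrow> co \<mu> (u - w) s = co \<mu> u s - co \<mu> w s"
  using mco_lin[of \<mu> s 1 u "-1" w] by simp
lemma mco_scale: "maximal_cone C \<mu> \<Longrightarrow> s \<in> \<mu> \<Longrightarrow> co \<mu> (a *\<^sub>R u) s = a * co \<mu> u s"
  using mco_lin[of \<mu> s a u 0 u] by simp
lemma mco_basis: "maximal_cone C \<mu> \<Longrightarrow> t \<in> \<mu> \<Longrightarrow> s \<in> \<mu> \<Longrightarrow> co \<mu> t s = (if s = t then 1 else 0)"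
  using co_basis[OF max_fin max_indep] by blast
lemma mco_sum: "maximal_cone C \<mu> \<Longrightarrow> s \<in> \<mu> \<Longrightarrow> finite F \<Longrightarrow> co \<mu> (\<Sum>t\<in>F. g t) s = (\<Sum>t\<in>F. co \<mu> (g t) s)"
  using co_sum[OF max_fin max_indep] max_span by blast

lemma mco_int:
  assumes "maximal_cone C \<mu>" "integral_vec v" "s \<in> \<mu>"
  shows "co \<mu> v s \<in> \<int>"
proof -
  obtain c :: "real^'n \<Rightarrow> int" where c: "v = (\<Sum>b\<in>\<mu>. of_int (c b) *\<^sub>R b)"
    using max_zbasis[OF assms(1)] assms(2) unfolding zbasis_def by blast
  have "co \<mu> v s = of_int (c s)" using mco_unique[OF assms(1) c assms(3)] .
  then show ?thesis by simp
qed

lemma ray_int: "maximal_cone C \<mu> \<Longrightarrow> \<rho> \<in> R \<Longrightarrow> s \<in> \<mu> \<Longrightarrow> co \<mu> \<rho> s \<in> \<int>"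
  using mco_int R_int by blast

lemma mco_pos: "maximal_cone C \<mu> \<Longrightarrow> v \<in> pos_cone \<mu> \<Longrightarrow> s \<in> \<mu> \<Longrightarrow> co \<mu> v s \<ge> 0"
  using pos_cone_co[OF max_fin max_indep] by blast

lemma mco_posI: "maximal_cone C \<mu> \<Longrightarrow> \<forall>s\<in>\<mu>. co \<mu> v s \<ge> 0 \<Longrightarrow> v \<in> pos_cone \<mu>"
  using pos_cone_coI[OF max_fin] max_span by blast

lemma mco_span0:
  assumes "maximal_cone C \<mu>" "\<sigma> \<subseteq> \<mu>" "v \<in> span \<sigma>" "s \<in> \<mu>" "s \<notin> \<sigma>"
  shows "co \<mu> v s = 0"
proof -
  have fs: "finite \<sigma>" using max_fin[OF assms(1)] assms(2) finite_subset by blast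
  obtain c where c: "v = (\<Sum>t\<in>\<sigma>. c t *\<^sub>R t)" using assms(3) span_finite[OF fs] by auto
  have "(\<Sum>t\<in>\<mu>. (if t \<in> \<sigma> then c t else 0) *\<^sub>R t) = (\<Sum>t\<in>\<sigma>. c t *\<^sub>R t)"
    by (rule sum.mono_neutral_cong_right) (use assms max_fin in auto)
  then have "co \<mu> v s = (if s \<in> \<sigma> then c s else 0)"
    using mco_unique[OF assms(1) _ assms(4), of v "\<lambda>t. if t \<in> \<sigma> then c t else 0"] c by simp
  then show ?thesis using assms(5) by simp
qed

end


context cnf begin

lemma co_change:
  assumes "maximal_cone C \<mu>" "maximal_cone C \<mu>'" "s' \<in> \<mu>'"
  shows "co \<mu>' v s' = (\<Sum>t\<in>\<mu>. co \<mu> v t * co \<mu>' t s')"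
proof -
  have e: "v = (\<Sum>t\<in>\<mu>. co \<mu> v t *\<^sub>R t)" by (rule mco_eq[OF assms(1)])
  have "co \<mu>' v s' = co \<mu>' (\<Sum>t\<in>\<mu>. co \<mu> v t *\<^sub>R t) s'" by (simp only: e[symmetric])
  also have "\<dots> = (\<Sum>t\<in>\<mu>. co \<mu>' (co \<mu> v t *\<^sub>R t) s')" by (rule mco_sum[OF assms(2,3) max_fin[OF assms(1)]])
  also have "\<dots> = (\<Sum>t\<in>\<mu>. co \<mu> v t * co \<mu>' t s')" using mco_scale[OF assms(2,3)] by simp
  finally show ?thesis .
qed

lemma wall:
  assumes mu: "maximal_cone C \<mu>" and s: "s \<in> \<mu>"
  shows "\<exists>\<mu>' s'. maximal_cone C \<mu>' \<and> \<mu>' = insert s' (\<mu> - {s}) \<and> s' \<notin> \<mu> \<and> (\<forall>v. co \<mu>' v s' = - co \<mu> v s)"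
proof -
  define \<tau> where "\<tau> = \<mu> - {s}"
  define p where "p = (\<Sum>t\<in>\<tau>. (1::real) *\<^sub>R t)"
  have tC: "\<tau> \<in> C" using C_sub max_C[OF mu] \<tau>_def by blast
  obtain T e where T: "T \<in> C" "p \<in> pos_cone T" "e > 0" "p + e *\<^sub>R (-s) \<in> pos_cone T"
    using local_cover by blast
  have tT: "\<tau> \<subseteq> T" using support[OF tC T(1,2) p_def] by simp
  obtain \<mu>' where mu': "maximal_cone C \<mu>'" "T \<subseteq> \<mu>'" using exists_max T(1) by blast
  have q: "p + e *\<^sub>R (-s) \<in> pos_cone \<mu>'" using pos_cone_mono[OF max_fin[OF mu'(1)] mu'(2)] T(4) by blast
  have "p \<in> span \<tau>" unfolding p_def by (rule co_span_sum)
  then have cps: "co \<mu> p s = 0" using mco_span0[OF mu _ _ s, of \<tau> p] \<tau>_def by auto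
  have cqs: "co \<mu> (p + e *\<^sub>R (-s)) s = - e"
    using mco_diff[OF mu s, of p "e *\<^sub>R s"] mco_scale[OF mu s, of e s] mco_basis[OF mu s s] cps by simp
  have snot: "s \<notin> \<mu>'"
  proof
    assume "s \<in> \<mu>'"
    then have "\<mu> \<subseteq> \<mu>'" using tT mu'(2) \<tau>_def by auto
    then have "\<mu>' = \<mu>" using max_eq[OF mu max_C[OF mu'(1)]] by simp
    then have "co \<mu> (p + e *\<^sub>R (-s)) s \<ge> 0" using mco_pos[OF mu] q s by simp
    then show False using cqs T(3) by simp
  qed
  have tmu': "\<tau> \<subseteq> \<mu>'" using tT mu'(2) by auto
  have cardt: "card \<tau> = CARD('n) - 1"
    using max_card[OF mu] s max_fin[OF mu] \<tau>_def by (simp add: card_Diff_singleton)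
  have cn: "CARD('n) \<ge> 1" by simp
  have "card (\<mu>' - \<tau>) = 1"
    using card_Diff_subset[OF finite_subset[OF tmu' max_fin[OF mu'(1)]] tmu'] max_card[OF mu'(1)] cardt cn
    by simp
  then obtain s' where s': "\<mu>' - \<tau> = {s'}" using card_1_singletonE by blast
  have mu'eq: "\<mu>' = insert s' \<tau>" using s' tmu' by blast
  have s'in: "s' \<in> \<mu>'" using mu'eq by simp
  have s'mu: "s' \<notin> \<mu>" using s' snot s'in \<tau>_def by blast
  define \<gamma> where "\<gamma> = co \<mu>' s s'"
  have key: "co \<mu>' v s' = co \<mu> v s * \<gamma>" for v
  proof -
    have "co \<mu>' v s' = (\<Sum>t\<in>\<mu>. co \<mu> v t * co \<mu>' t s')" by (rule co_change[OF mu mu'(1) s'in])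
    also have "\<dots> = co \<mu> v s * co \<mu>' s s' + (\<Sum>t\<in>\<mu> - {s}. co \<mu> v t * co \<mu>' t s')"
      using sum.remove[OF max_fin[OF mu] s] by simp
    also have "(\<Sum>t\<in>\<mu> - {s}. co \<mu> v t * co \<mu>' t s') = 0"
    proof (rule sum.neutral, rule ballI)
      fix t assume t: "t \<in> \<mu> - {s}"
      then have "t \<in> \<mu>'" "t \<noteq> s'" using tmu' \<tau>_def s'mu by auto
      then show "co \<mu> v t * co \<mu>' t s' = 0" using mco_basis[OF mu'(1) _ s'in] by simp
    qed
    finally show ?thesis unfolding \<gamma>_def by simp
  qed
  have sR: "s \<in> R" using CR max_C[OF mu] s by blast
  have s'R: "s' \<in> R" using CR max_C[OF mu'(1)] s'in by blast
  have "co \<mu> s' s * \<gamma> = 1" using key[of s'] mco_basis[OF mu'(1) s'in s'in] by simp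
  then have g: "\<gamma> = 1 \<or> \<gamma> = -1"
    using int_prod_one ray_int[OF mu s'R s] ray_int[OF mu'(1) sR s'in] \<gamma>_def by blast
  have "co \<mu>' (p + e *\<^sub>R (-s)) s' \<ge> 0" using mco_pos[OF mu'(1) q s'in] .
  then have "- e * \<gamma> \<ge> 0" using key cqs by simp
  then have "\<gamma> = -1" using g T(3) by (auto simp: mult_le_0_iff)
  then have "\<forall>v. co \<mu>' v s' = - co \<mu> v s" using key by simp
  then show ?thesis using mu'(1) mu'eq s'mu \<tau>_def by blast
qed

lemma lower_from_upper:
  assumes up: "\<And>\<mu> \<rho>. maximal_cone C \<mu> \<Longrightarrow> \<rho> \<in> R \<Longrightarrow> \<rho> \<notin> \<mu> \<Longrightarrow> \<forall>s\<in>\<mu>. co \<mu> \<rho> s \<le> 1"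
    and mu: "maximal_cone C \<mu>" and r: "\<rho> \<in> R" "\<rho> \<notin> \<mu>" and s: "s \<in> \<mu>"
  shows "co \<mu> \<rho> s \<ge> -1"
proof (rule ccontr)
  assume "\<not> co \<mu> \<rho> s \<ge> -1"
  then have lt: "co \<mu> \<rho> s < -1" by simp
  obtain \<mu>' s' where w: "maximal_cone C \<mu>'" "\<mu>' = insert s' (\<mu> - {s})" "s' \<notin> \<mu>" "\<forall>v. co \<mu>' v s' = - co \<mu> v s"
    using wall[OF mu s] by blast
  have gt: "co \<mu>' \<rho> s' > 1" using w(4) lt by simp
  show False
  proof (cases "\<rho> \<in> \<mu>'")
    case True
    then have "\<rho> = s'" using w(2) r(2) by auto
    then show False using gt mco_basis[OF w(1)] w(2) by simp
  next
    case False
    then show False using up[OF w(1) r(1) False] gt w(2) by auto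
  qed
qed

definition possum where "possum \<mu> \<sigma> v = (\<Sum>s\<in>\<mu> - \<sigma>. max (co \<mu> v s) 0)"
definition negsum where "negsum \<mu> \<sigma> v = (\<Sum>s\<in>\<mu> - \<sigma>. max (- co \<mu> v s) 0)"

lemma possum_le:
  assumes mu: "maximal_cone C \<mu>" and p: "possum \<mu> \<sigma> v \<le> 1" and s: "s \<in> \<mu> - \<sigma>"
  shows "co \<mu> v s \<le> 1"
proof -
  have "max (co \<mu> v s) 0 \<le> possum \<mu> \<sigma> v" unfolding possum_def
    by (rule member_le_sum) (use s max_fin[OF mu] in auto)
  then show ?thesis using p by linarith
qed

lemma possum_card:
  assumes mu: "maximal_cone C \<mu>" and p: "possum \<mu> \<sigma> v \<le> 1"
  shows "card {s\<in>\<mu> - \<sigma>. co \<mu> v s = 1} \<le> 1"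
proof (rule ccontr)
  assume a: "\<not> ?thesis"
  have fin: "finite {s\<in>\<mu> - \<sigma>. co \<mu> v s = 1}" using max_fin[OF mu] by simp
  obtain s1 s2 where ss: "s1 \<in> {s\<in>\<mu> - \<sigma>. co \<mu> v s = 1}" "s2 \<in> {s\<in>\<mu> - \<sigma>. co \<mu> v s = 1}" "s1 \<noteq> s2"
  proof -
    have "\<not> (\<forall>x\<in>{s\<in>\<mu> - \<sigma>. co \<mu> v s = 1}. \<forall>y\<in>{s\<in>\<mu> - \<sigma>. co \<mu> v s = 1}. x = y)"
      using a card_le_Suc0_iff_eq[OF fin] by simp
    then show ?thesis using that by blast
  qed
  have "(\<Sum>s\<in>{s1,s2}. max (co \<mu> v s) 0) \<le> possum \<mu> \<sigma> v" unfolding possum_def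
    by (rule sum_mono2) (use ss max_fin[OF mu] in auto)
  moreover have "(\<Sum>s\<in>{s1,s2}. max (co \<mu> v s) 0) = 2" using ss by simp
  ultimately show False using p by simp
qed

lemma iii_from:
  assumes up: "\<And>\<mu> \<rho>. maximal_cone C \<mu> \<Longrightarrow> \<rho> \<in> R \<Longrightarrow> \<rho> \<notin> \<mu> \<Longrightarrow> possum \<mu> {} \<rho> \<le> 1"
  shows "\<forall>\<mu> \<rho> b. maximal_cone C \<mu> \<and> \<rho> \<in> R \<and> \<rho> = (\<Sum>s\<in>\<mu>. b s *\<^sub>R s) \<longrightarrow>
                  (\<forall>s\<in>\<mu>. -1 \<le> b s \<and> b s \<le> 1) \<and> card {s\<in>\<mu>. b s = 1} \<le> 1"
proof (intro allI impI)
  fix \<mu> \<rho> b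
  assume a: "maximal_cone C \<mu> \<and> \<rho> \<in> R \<and> \<rho> = (\<Sum>s\<in>\<mu>. b s *\<^sub>R s)"
  then have mu: "maximal_cone C \<mu>" and r: "\<rho> \<in> R" by auto
  have bco: "\<And>s. s \<in> \<mu> \<Longrightarrow> b s = co \<mu> \<rho> s" using mco_unique[OF mu] a by metis
  have set_eq: "{s\<in>\<mu>. b s = 1} = {s\<in>\<mu> - {}. co \<mu> \<rho> s = 1}" using bco by auto
  show "(\<forall>s\<in>\<mu>. -1 \<le> b s \<and> b s \<le> 1) \<and> card {s\<in>\<mu>. b s = 1} \<le> 1"
  proof (cases "\<rho> \<in> \<mu>")
    case True
    have bi: "\<And>s. s \<in> \<mu> \<Longrightarrow> b s = (if s = \<rho> then 1 else 0)" using bco mco_basis[OF mu True] by simp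
    have "{s\<in>\<mu>. b s = 1} = {\<rho>}"
    proof (rule set_eqI)
      fix x show "x \<in> {s\<in>\<mu>. b s = 1} \<longleftrightarrow> x \<in> {\<rho>}"
        using bi[of x] True by (cases "x = \<rho>") auto
    qed
    then show ?thesis using bi by simp
  next
    case False
    have up1: "\<forall>s\<in>\<mu>. co \<mu> \<rho> s \<le> 1" if "maximal_cone C \<mu>" "\<rho> \<in> R" "\<rho> \<notin> \<mu>" for \<mu> \<rho>
      using possum_le[OF that(1) up[OF that]] by blast
    have "\<forall>s\<in>\<mu>. -1 \<le> b s \<and> b s \<le> 1"
      using bco up1[OF mu r False] lower_from_upper[OF up1 mu r False] by auto
    moreover have "card {s\<in>\<mu>. b s = 1} \<le> 1" unfolding set_eq using possum_card[OF mu up[OF mu r False]] .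
    ultimately show ?thesis by simp
  qed
qed

end


context cnf begin

lemma mco_sub_sum:
  assumes mu: "maximal_cone C \<mu>" and "\<sigma> \<subseteq> \<mu>" "t \<in> \<mu>"
  shows "co \<mu> (\<Sum>u\<in>\<sigma>. c u *\<^sub>R u) t = (if t \<in> \<sigma> then c t else 0)"
proof -
  have "(\<Sum>u\<in>\<mu>. (if u \<in> \<sigma> then c u else 0) *\<^sub>R u) = (\<Sum>u\<in>\<sigma>. c u *\<^sub>R u)"
    by (rule sum.mono_neutral_cong_right) (use assms max_fin in auto)
  then show ?thesis
    using mco_unique[OF mu _ assms(3), of "\<Sum>u\<in>\<sigma>. c u *\<^sub>R u" "\<lambda>u. if u \<in> \<sigma> then c u else 0"] by simp
qed

lemma mco_in_span:
  assumes mu: "maximal_cone C \<mu>" and "\<sigma> \<subseteq> \<mu>" "\<forall>t\<in>\<mu> - \<sigma>. co \<mu> x t = 0"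
  shows "x \<in> span \<sigma>"
proof -
  have "x = (\<Sum>t\<in>\<mu>. co \<mu> x t *\<^sub>R t)" by (rule mco_eq[OF mu])
  also have "\<dots> = (\<Sum>t\<in>\<sigma>. co \<mu> x t *\<^sub>R t)"
    by (rule sum.mono_neutral_right) (use assms max_fin in auto)
  finally show ?thesis using co_span_sum by metis
qed

definition FanoC where
  "FanoC \<sigma> \<longleftrightarrow> (\<forall>\<mu>. maximal_cone C \<mu> \<and> \<sigma> \<subseteq> \<mu> \<longrightarrow>
      (\<forall>\<rho>\<in>R. insert \<rho> \<sigma> \<in> C \<and> \<rho> \<notin> \<mu> \<longrightarrow> (\<Sum>s\<in>\<mu> - \<sigma>. co \<mu> \<rho> s) < 1))"

lemma inner_co:
  assumes mu: "maximal_cone C \<mu>"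
  shows "m \<bullet> v = (\<Sum>s\<in>\<mu>. co \<mu> v s * (m \<bullet> s))"
proof -
  have "m \<bullet> v = m \<bullet> (\<Sum>s\<in>\<mu>. co \<mu> v s *\<^sub>R s)" using mco_eq[OF mu, of v] by simp
  then show ?thesis by (simp add: inner_sum_right)
qed

lemma exists_m:
  assumes mu: "maximal_cone C \<mu>" and "\<sigma> \<subseteq> \<mu>"
  shows "\<exists>m. \<forall>v. m \<bullet> v = (\<Sum>s\<in>\<mu> - \<sigma>. co \<mu> v s)"
proof -
  define g where "g v = (\<Sum>s\<in>\<mu> - \<sigma>. co \<mu> v s)" for v
  define m :: "real^'n" where "m = (\<chi> i. g (axis i 1))"
  have "m \<bullet> v = g v" for v
  proof -
    have ve: "v = (\<Sum>i\<in>UNIV. v $ i *\<^sub>R axis i 1)"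
      using basis_expansion[of v] by (simp add: scalar_mult_eq_scaleR)
    have "m \<bullet> v = (\<Sum>i\<in>UNIV. v $ i * (m \<bullet> axis i 1))"
      by (subst ve) (simp add: inner_sum_right)
    also have "\<dots> = (\<Sum>i\<in>UNIV. v $ i * g (axis i 1))"
      by (simp add: cart_eq_inner_axis[symmetric] m_def)
    also have "\<dots> = g v"
    proof -
      have "g v = (\<Sum>s\<in>\<mu> - \<sigma>. co \<mu> (\<Sum>i\<in>UNIV. v $ i *\<^sub>R axis i 1) s)" unfolding g_def
        by (simp only: ve[symmetric])
      also have "\<dots> = (\<Sum>s\<in>\<mu> - \<sigma>. \<Sum>i\<in>UNIV. v $ i * co \<mu> (axis i 1) s)"
        by (rule sum.cong) (auto simp: mco_sum[OF mu] mco_scale[OF mu])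
      also have "\<dots> = (\<Sum>i\<in>UNIV. v $ i * g (axis i 1))"
        unfolding g_def by (subst sum.swap) (simp add: sum_distrib_left)
      finally show ?thesis by simp
    qed
    finally show ?thesis .
  qed
  then show ?thesis unfolding g_def by blast
qed

lemma fano_FanoC:
  assumes sC: "\<sigma> \<in> C"
  shows "fano_orbit_closure R C \<sigma> \<longleftrightarrow> FanoC \<sigma>"
proof
  assume F: "fano_orbit_closure R C \<sigma>"
  show "FanoC \<sigma>" unfolding FanoC_def
  proof (intro allI impI ballI)
    fix \<mu> \<rho> assume a: "maximal_cone C \<mu> \<and> \<sigma> \<subseteq> \<mu>" "\<rho> \<in> R" "insert \<rho> \<sigma> \<in> C \<and> \<rho> \<notin> \<mu>"
    obtain m where m: "\<forall>v. m \<bullet> v = (\<Sum>s\<in>\<mu> - \<sigma>. co \<mu> v s)" using exists_m a(1) by blast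
    have "\<forall>r\<in>\<sigma>. m \<bullet> r = 0"
    proof
      fix r assume r: "r \<in> \<sigma>"
      have "\<forall>s\<in>\<mu> - \<sigma>. co \<mu> r s = 0" using mco_basis[of \<mu> r] a(1) r by auto
      then show "m \<bullet> r = 0" using m by simp
    qed
    moreover have "\<forall>r\<in>\<mu> - \<sigma>. m \<bullet> r = 1"
    proof
      fix r assume r: "r \<in> \<mu> - \<sigma>"
      have "(\<Sum>s\<in>\<mu> - \<sigma>. co \<mu> r s) = (\<Sum>s\<in>\<mu> - \<sigma>. if s = r then 1 else 0)"
        by (rule sum.cong) (use mco_basis[of \<mu> r] a(1) r in auto)
      also have "\<dots> = 1" using r max_fin a(1) by simp
      finally show "m \<bullet> r = 1" using m by simp
    qed
    ultimately have "m \<bullet> \<rho> < 1" using F a unfolding fano_orbit_closure_def by blast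
    then show "(\<Sum>s\<in>\<mu> - \<sigma>. co \<mu> \<rho> s) < 1" using m by simp
  qed
next
  assume F: "FanoC \<sigma>"
  show "fano_orbit_closure R C \<sigma>" unfolding fano_orbit_closure_def
  proof (intro allI impI ballI)
    fix \<mu> m \<rho>
    assume a: "maximal_cone C \<mu> \<and> \<sigma> \<subseteq> \<mu>" "(\<forall>r\<in>\<sigma>. m \<bullet> r = 0) \<and> (\<forall>r\<in>\<mu> - \<sigma>. m \<bullet> r = 1)"
      "\<rho> \<in> R" "insert \<rho> \<sigma> \<in> C \<and> \<rho> \<notin> \<mu>"
    have "m \<bullet> \<rho> = (\<Sum>s\<in>\<mu>. co \<mu> \<rho> s * (m \<bullet> s))" using inner_co a(1) by blast
    also have "\<dots> = (\<Sum>s\<in>\<mu>. if s \<in> \<sigma> then 0 else co \<mu> \<rho> s)"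
      by (rule sum.cong) (use a(2) in auto)
    also have "\<dots> = (\<Sum>s\<in>\<mu> - \<sigma>. co \<mu> \<rho> s)"
      by (rule sum.mono_neutral_cong_right) (use a(1) max_fin in auto)
    finally show "m \<bullet> \<rho> < 1" using F a unfolding FanoC_def by auto
  qed
qed

lemma sum_int: "maximal_cone C \<mu> \<Longrightarrow> \<rho> \<in> R \<Longrightarrow> (\<Sum>s\<in>A. co \<mu> \<rho> s) \<in> \<int>" if "A \<subseteq> \<mu>"
  using that ray_int by (intro Ints_sum) blast

lemma int_lt1: "(x::real) \<in> \<int> \<Longrightarrow> x < 1 \<Longrightarrow> x \<le> 0"
  by (elim Ints_cases) simp

lemma int_gt0: "(x::real) \<in> \<int> \<Longrightarrow> x > 0 \<Longrightarrow> x \<ge> 1"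
  by (elim Ints_cases) simp

lemma int_lt0: "(x::real) \<in> \<int> \<Longrightarrow> x < 0 \<Longrightarrow> x \<le> -1"
  by (elim Ints_cases) simp

lemma FanoC_le0:
  assumes "FanoC \<sigma>" "maximal_cone C \<mu>" "\<sigma> \<subseteq> \<mu>" "\<rho> \<in> R" "insert \<rho> \<sigma> \<in> C" "\<rho> \<notin> \<mu>"
  shows "(\<Sum>s\<in>\<mu> - \<sigma>. co \<mu> \<rho> s) \<le> 0"
  using assms unfolding FanoC_def by (intro int_lt1 sum_int[of "\<mu> - \<sigma>" \<mu>]) auto

lemma exists_primitive:
  assumes "Q \<subseteq> R" "Q \<notin> C"
  shows "\<exists>P\<subseteq>Q. primitive_set R C P"
proof -
  define G where "G = {P. P \<subseteq> Q \<and> P \<notin> C}"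
  have finQ: "finite Q" using assms finR finite_subset by blast
  have "Q \<in> G" using assms G_def by auto
  then obtain P0 where P0: "P0 \<in> G" "\<And>P. P \<in> G \<Longrightarrow> card P0 \<le> card P"
    using ex_has_least_nat[of "\<lambda>P. P \<in> G" Q card] by blast
  have "primitive_set R C P0" unfolding primitive_set_def
  proof (intro conjI allI impI)
    show "P0 \<subseteq> R" "P0 \<notin> C" using P0(1) assms unfolding G_def by auto
    fix P assume "P \<subset> P0"
    moreover have "finite P0" using P0(1) finQ finite_subset unfolding G_def by auto
    ultimately have "card P < card P0" "P \<subseteq> Q" using psubset_card_mono P0(1) unfolding G_def by auto
    then show "P \<in> C" using P0(2)[of P] unfolding G_def by auto
  qed
  then show ?thesis using P0(1) unfolding G_def by auto
qed

end


context cnf begin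

definition III where
  "III \<longleftrightarrow> (\<forall>\<mu> \<rho>. maximal_cone C \<mu> \<and> \<rho> \<in> R \<longrightarrow>
      (\<forall>s\<in>\<mu>. -1 \<le> co \<mu> \<rho> s \<and> co \<mu> \<rho> s \<le> 1) \<and> card {s\<in>\<mu>. co \<mu> \<rho> s = 1} \<le> 1)"

lemma iii_III:
  assumes "\<forall>\<mu> \<rho> b. maximal_cone C \<mu> \<and> \<rho> \<in> R \<and> \<rho> = (\<Sum>s\<in>\<mu>. b s *\<^sub>R s) \<longrightarrow>
                  (\<forall>s\<in>\<mu>. -1 \<le> b s \<and> b s \<le> 1) \<and> card {s\<in>\<mu>. b s = 1} \<le> 1"
  shows III
  unfolding III_def
proof (intro allI impI)
  fix \<mu> \<rho> assume a: "maximal_cone C \<mu> \<and> \<rho> \<in> R"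
  then have "\<rho> = (\<Sum>s\<in>\<mu>. co \<mu> \<rho> s *\<^sub>R s)" using mco_eq by blast
  then show "(\<forall>s\<in>\<mu>. -1 \<le> co \<mu> \<rho> s \<and> co \<mu> \<rho> s \<le> 1) \<and> card {s\<in>\<mu>. co \<mu> \<rho> s = 1} \<le> 1"
    using assms a by blast
qed

lemma two_ones:
  assumes mu: "maximal_cone C \<mu>" and c: "card {s\<in>\<mu>. f s = (1::real)} \<le> 1"
    and "s1 \<in> \<mu>" "s2 \<in> \<mu>" "f s1 = 1" "f s2 = 1"
  shows "s1 = s2"
proof (rule ccontr)
  assume ne: "s1 \<noteq> s2"
  have "{s1, s2} \<subseteq> {s\<in>\<mu>. f s = 1}" using assms by auto
  then have "card {s1, s2} \<le> card {s\<in>\<mu>. f s = 1}" by (rule card_mono[rotated]) (use max_fin[OF mu] in auto)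
  then show False using ne c by simp
qed

lemma III_FanoC:
  assumes I: III and sC: "\<sigma> \<in> C"
  shows "FanoC \<sigma>"
  unfolding FanoC_def
proof (intro allI impI ballI)
  fix \<mu> \<rho> assume a: "maximal_cone C \<mu> \<and> \<sigma> \<subseteq> \<mu>" "\<rho> \<in> R" "insert \<rho> \<sigma> \<in> C \<and> \<rho> \<notin> \<mu>"
  have mu: "maximal_cone C \<mu>" and sm: "\<sigma> \<subseteq> \<mu>" and r: "\<rho> \<in> R" and rC: "insert \<rho> \<sigma> \<in> C"
    and rmu: "\<rho> \<notin> \<mu>" using a by auto
  define b where "b = co \<mu> \<rho>"
  have bint: "\<And>s. s \<in> \<mu> \<Longrightarrow> b s \<in> \<int>" unfolding b_def using ray_int[OF mu r] by blast
  have ble: "\<And>s. s \<in> \<mu> \<Longrightarrow> b s \<le> 1" and bcard: "card {s\<in>\<mu>. b s = 1} \<le> 1"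
    using I mu r unfolding III_def b_def by blast+
  show "(\<Sum>s\<in>\<mu> - \<sigma>. co \<mu> \<rho> s) < 1"
  proof (rule ccontr)
    assume "\<not> (\<Sum>s\<in>\<mu> - \<sigma>. co \<mu> \<rho> s) < 1"
    then have ge: "(\<Sum>s\<in>\<mu> - \<sigma>. b s) \<ge> 1" unfolding b_def by simp
    have "\<exists>s0\<in>\<mu> - \<sigma>. b s0 > 0"
    proof (rule ccontr)
      assume "\<not> ?thesis"
      then have "(\<Sum>s\<in>\<mu> - \<sigma>. b s) \<le> 0" by (intro sum_nonpos) (auto simp: not_less)
      then show False using ge by simp
    qed
    then obtain s0 where s0: "s0 \<in> \<mu> - \<sigma>" "b s0 > 0" by blast
    have b0: "b s0 = 1" using int_gt0[OF bint s0(2)] ble s0(1) by force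
    have oth: "\<And>t. t \<in> \<mu> - \<sigma> \<Longrightarrow> t \<noteq> s0 \<Longrightarrow> b t \<le> 0"
    proof -
      fix t assume t: "t \<in> \<mu> - \<sigma>" "t \<noteq> s0"
      have "b t \<noteq> 1" using two_ones[OF mu bcard, of t s0] t s0 b0 by auto
      then have "b t < 1" using ble t by force
      then show "b t \<le> 0" using int_lt1 bint t by blast
    qed
    have fin: "finite (\<mu> - \<sigma>)" using max_fin[OF mu] by simp
    have "(\<Sum>s\<in>\<mu> - \<sigma>. b s) = b s0 + (\<Sum>s\<in>\<mu> - \<sigma> - {s0}. b s)"
      using sum.remove[OF fin s0(1)] by simp
    then have "(\<Sum>s\<in>\<mu> - \<sigma> - {s0}. - b s) \<le> 0" using ge b0 by (simp add: sum_negf)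
    moreover have "\<forall>s\<in>\<mu> - \<sigma> - {s0}. - b s \<ge> 0" using oth by force
    ultimately have "\<forall>s\<in>\<mu> - \<sigma> - {s0}. - b s = 0"
      using sum_nonneg_eq_0_iff[of "\<mu> - \<sigma> - {s0}" "\<lambda>s. - b s"] fin
      by (metis (no_types, lifting) antisym finite_Diff sum_nonneg)
    then have zero: "\<And>t. t \<in> \<mu> - \<sigma> \<Longrightarrow> t \<noteq> s0 \<Longrightarrow> b t = 0" by force
    define d where "d t = max (- b t) 0" for t
    define z where "z = \<rho> + (\<Sum>t\<in>\<sigma>. d t *\<^sub>R t)"
    have coz: "co \<mu> z t = b t + (if t \<in> \<sigma> then d t else 0)" if "t \<in> \<mu>" for t
      unfolding z_def b_def using mco_add[OF mu that] mco_sub_sum[OF mu sm that] by simp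
    have zpos: "z \<in> pos_cone \<mu>"
    proof (rule mco_posI[OF mu], rule ballI)
      fix t assume t: "t \<in> \<mu>"
      show "co \<mu> z t \<ge> 0"
      proof (cases "t \<in> \<sigma>")
        case True then show ?thesis using coz[OF t] unfolding d_def by simp
      next
        case False
        then show ?thesis using coz[OF t] zero[of t] b0 t by (cases "t = s0") auto
      qed
    qed
    have fs: "finite \<sigma>" using C_fin[OF sC] .
    have rs: "\<rho> \<notin> \<sigma>" using rmu sm by auto
    have "z \<in> pos_cone (insert \<rho> \<sigma>)" unfolding pos_cone_def
    proof (intro CollectI exI[of _ "\<lambda>u. if u = \<rho> then 1 else d u"] conjI)
      show "\<forall>s\<in>insert \<rho> \<sigma>. 0 \<le> (if s = \<rho> then 1 else d s)" unfolding d_def by simp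
      have "(\<Sum>s\<in>insert \<rho> \<sigma>. (if s = \<rho> then 1 else d s) *\<^sub>R s) = \<rho> + (\<Sum>s\<in>\<sigma>. (if s = \<rho> then 1 else d s) *\<^sub>R s)"
        using sum.insert[OF fs rs, of "\<lambda>s. (if s = \<rho> then 1 else d s) *\<^sub>R s"] by simp
      also have "(\<Sum>s\<in>\<sigma>. (if s = \<rho> then 1 else d s) *\<^sub>R s) = (\<Sum>s\<in>\<sigma>. d s *\<^sub>R s)"
        by (rule sum.cong) (use rs in auto)
      finally show "z = (\<Sum>s\<in>insert \<rho> \<sigma>. (if s = \<rho> then 1 else d s) *\<^sub>R s)" unfolding z_def by simp
    qed
    then have "co \<mu> z s0 = 0"
      using vanish[OF max_C[OF mu] rC zpos] s0(1) rmu by auto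
    moreover have "co \<mu> z s0 = 1" using coz[of s0] s0(1) b0 by simp
    ultimately show False by simp
  qed
qed

end


context cnf begin

lemma sum_nonneg_zero:
  fixes f :: "'a \<Rightarrow> real"
  assumes "finite A" "\<forall>x\<in>A. f x \<ge> 0" "sum f A \<le> 0" "x \<in> A"
  shows "f x = 0"
proof -
  have "sum f A \<ge> 0" using assms(2) by (intro sum_nonneg) auto
  then have "sum f A = 0" using assms(3) by linarith
  then show ?thesis using sum_nonneg_eq_0_iff[OF assms(1)] assms(2,4) by blast
qed

lemma vec_from_co:
  assumes mu: "maximal_cone C \<mu>" "r \<in> \<mu>" "\<forall>t\<in>\<mu>. co \<mu> v t = (if t = r then 1 else 0)"
  shows "v = r"
proof -
  have "v = (\<Sum>t\<in>\<mu>. co \<mu> v t *\<^sub>R t)" by (rule mco_eq[OF mu(1)])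
  also have "\<dots> = (\<Sum>t\<in>\<mu>. if t = r then r else 0)" by (rule sum.cong) (use mu in auto)
  also have "\<dots> = r" using mu(2) max_fin[OF mu(1)] by simp
  finally show ?thesis .
qed

lemma vec_zero_co:
  assumes mu: "maximal_cone C \<mu>" "\<forall>t\<in>\<mu>. co \<mu> v t = 0"
  shows "v = 0"
proof -
  have "v = (\<Sum>t\<in>\<mu>. co \<mu> v t *\<^sub>R t)" by (rule mco_eq[OF mu(1)])
  also have "\<dots> = 0" using mu by simp
  finally show ?thesis .
qed

lemma III_ii:
  assumes I: III and P: "primitive_set R C P"
  shows "\<Sum>P = 0 \<or> \<Sum>P \<in> R"
proof -
  have PR: "P \<subseteq> R" "P \<notin> C" "\<And>Q. Q \<subset> P \<Longrightarrow> Q \<in> C" using P unfolding primitive_set_def by auto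
  have finP: "finite P" using PR finR finite_subset by blast
  have Pne: "P \<noteq> {}" using PR(2) C_empty by auto
  obtain x where x: "x \<in> P" using Pne by blast
  define \<sigma> where "\<sigma> = P - {x}"
  have sC: "\<sigma> \<in> C" using PR(3) x \<sigma>_def by blast
  have xR: "x \<in> R" using x PR by blast
  have sne: "\<sigma> \<noteq> {}"
  proof
    assume "\<sigma> = {}"
    then have "P = {x}" using x \<sigma>_def by blast
    then show False using C_ray[OF xR] PR(2) by simp
  qed
  obtain x' where x': "x' \<in> \<sigma>" using sne by blast
  define p where "p = (\<Sum>t\<in>\<sigma>. (1::real) *\<^sub>R t)"
  obtain T e where T: "T \<in> C" "p \<in> pos_cone T" "e > 0" "p + e *\<^sub>R x \<in> pos_cone T"
    using local_cover by blast
  have sT: "\<sigma> \<subseteq> T" using support[OF sC T(1,2) p_def] by simp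
  obtain \<mu> where mu: "maximal_cone C \<mu>" "T \<subseteq> \<mu>" using exists_max T(1) by blast
  have sm: "\<sigma> \<subseteq> \<mu>" using sT mu by auto
  have Px: "P = insert x \<sigma>" using x \<sigma>_def by blast
  have xs: "x \<notin> \<sigma>" using \<sigma>_def by blast
  have xmu: "x \<notin> \<mu>"
  proof
    assume "x \<in> \<mu>"
    then have "P \<subseteq> \<mu>" using Px sm by auto
    then show False using C_sub[OF max_C[OF mu(1)]] PR(2) by blast
  qed
  define b where "b = co \<mu> x"
  have bint: "\<And>t. t \<in> \<mu> \<Longrightarrow> b t \<in> \<int>" unfolding b_def using ray_int[OF mu(1) xR] by blast
  have bge: "\<And>t. t \<in> \<mu> \<Longrightarrow> b t \<ge> -1" using I mu(1) xR unfolding III_def b_def by blast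
  have pspan: "p \<in> span \<sigma>" unfolding p_def by (rule co_span_sum)
  have bnn: "b t \<ge> 0" if t: "t \<in> \<mu> - \<sigma>" for t
  proof -
    have q: "p + e *\<^sub>R x \<in> pos_cone \<mu>" using pos_cone_mono[OF max_fin[OF mu(1)] mu(2)] T(4) by blast
    have "co \<mu> (p + e *\<^sub>R x) t \<ge> 0" using mco_pos[OF mu(1) q] t by blast
    moreover have "co \<mu> (p + e *\<^sub>R x) t = co \<mu> p t + e * b t"
      unfolding b_def using mco_add[OF mu(1)] mco_scale[OF mu(1)] t by simp
    moreover have "co \<mu> p t = 0" using mco_span0[OF mu(1) sm pspan] t by blast
    ultimately have "e * b t \<ge> 0" by simp
    then show ?thesis using T(3) by (simp add: zero_le_mult_iff)
  qed
  have fin: "finite (\<mu> - \<sigma>)" using max_fin[OF mu(1)] by simp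
  define S where "S = (\<Sum>t\<in>\<mu> - \<sigma>. b t)"
  have S0: "S \<ge> 0" unfolding S_def using bnn by (intro sum_nonneg) auto
  have ineq: "b y + S \<le> 0" if y: "y \<in> \<sigma>" for y
  proof -
    have yx: "y \<noteq> x" using y xs by blast
    have "\<sigma> - {y} \<in> C" using C_sub[OF sC] by blast
    then have FC: "FanoC (\<sigma> - {y})" using III_FanoC[OF I] by blast
    have "insert x (\<sigma> - {y}) \<subset> P" using Px y yx xs by blast
    then have iC: "insert x (\<sigma> - {y}) \<in> C" using PR(3) by blast
    have "(\<Sum>s\<in>\<mu> - (\<sigma> - {y}). co \<mu> x s) \<le> 0"
      using FanoC_le0[OF FC mu(1) _ xR iC xmu] sm by blast
    moreover have "\<mu> - (\<sigma> - {y}) = insert y (\<mu> - \<sigma>)" using y sm by blast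
    moreover have "y \<notin> \<mu> - \<sigma>" using y by blast
    ultimately show ?thesis unfolding S_def b_def using sum.insert[OF fin, of y "co \<mu> x"] by simp
  qed
  have bm1: "b y = -1" if y: "y \<in> \<sigma>" for y
  proof -
    have yx: "y \<noteq> x" using y xs by blast
    have ym: "y \<in> \<mu>" using y sm by blast
    have "b y \<noteq> 0"
    proof
      assume by0: "b y = 0"
      then have "S \<le> 0" using ineq[OF y] by simp
      then have z: "\<And>t. t \<in> \<mu> - \<sigma> \<Longrightarrow> b t = 0"
        using sum_nonneg_zero[OF fin] bnn unfolding S_def by blast
      have "x \<in> span (\<sigma> - {y})"
      proof (rule mco_in_span[OF mu(1)])
        show "\<sigma> - {y} \<subseteq> \<mu>" using sm by blast
        show "\<forall>t\<in>\<mu> - (\<sigma> - {y}). co \<mu> x t = 0" using z by0 unfolding b_def by blast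
      qed
      moreover have "insert x (\<sigma> - {y}) \<subset> P" using Px y yx xs by blast
      then have "independent (insert x (\<sigma> - {y}))" using PR(3) C_indep by blast
      moreover have "insert x (\<sigma> - {y}) - {x} = \<sigma> - {y}" using xs by blast
      ultimately show False unfolding dependent_def by (metis insertI1)
    qed
    moreover have "b y \<le> 0" using ineq[OF y] S0 by simp
    ultimately have "b y < 0" by simp
    then have "b y \<le> -1" using int_lt0 bint ym by blast
    then show ?thesis using bge[OF ym] by simp
  qed
  have S1: "S \<le> 1" using ineq[OF x'] bm1[OF x'] by simp
  have fs: "finite \<sigma>" using C_fin[OF sC] .
  have sumP: "\<Sum>P = x + (\<Sum>t\<in>\<sigma>. (1::real) *\<^sub>R t)" using Px sum.insert[OF fs xs, of "\<lambda>t. t"] by simp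
  have cov: "co \<mu> (\<Sum>P) t = (if t \<in> \<sigma> then 0 else b t)" if t: "t \<in> \<mu>" for t
  proof -
    have "co \<mu> (\<Sum>P) t = b t + (if t \<in> \<sigma> then 1 else 0)"
      unfolding sumP b_def using mco_add[OF mu(1) t] mco_sub_sum[OF mu(1) sm t, of "\<lambda>_. 1", simplified] by simp
    then show ?thesis using bm1 by auto
  qed
  show ?thesis
  proof (cases "\<forall>t\<in>\<mu> - \<sigma>. b t = 0")
    case True
    then have "\<Sum>P = 0" using vec_zero_co[OF mu(1)] cov by auto
    then show ?thesis by simp
  next
    case False
    then obtain r where r: "r \<in> \<mu> - \<sigma>" "b r \<noteq> 0" by blast
    then have "b r > 0" using bnn[OF r(1)] by simp
    then have br1: "b r \<ge> 1" using int_gt0 bint r(1) by blast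
    have "S = b r + (\<Sum>t\<in>\<mu> - \<sigma> - {r}. b t)" unfolding S_def using sum.remove[OF fin r(1)] by simp
    moreover have "(\<Sum>t\<in>\<mu> - \<sigma> - {r}. b t) \<ge> 0" using bnn by (intro sum_nonneg) auto
    ultimately have rest: "(\<Sum>t\<in>\<mu> - \<sigma> - {r}. b t) \<le> 0" and brr: "b r = 1" using S1 br1 by linarith+
    have z: "\<And>t. t \<in> \<mu> - \<sigma> - {r} \<Longrightarrow> b t = 0"
      using sum_nonneg_zero[of "\<mu> - \<sigma> - {r}" b] rest bnn fin by auto
    have "\<forall>t\<in>\<mu>. co \<mu> (\<Sum>P) t = (if t = r then 1 else 0)"
    proof
      fix t assume t: "t \<in> \<mu>"
      show "co \<mu> (\<Sum>P) t = (if t = r then 1 else 0)"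
        using cov[OF t] z[of t] brr r(1) t by (cases "t \<in> \<sigma>") auto
    qed
    then have "\<Sum>P = r" using vec_from_co[OF mu(1)] r(1) by blast
    moreover have "r \<in> R" using r(1) CR max_C[OF mu(1)] by blast
    ultimately show ?thesis by simp
  qed
qed

end


lemma real_measure_induct:
  fixes f :: "'a \<Rightarrow> real"
  assumes nn: "\<And>y. f y \<ge> 0"
    and step: "\<And>x. Q x \<Longrightarrow> (\<And>y. Q y \<Longrightarrow> f y \<le> f x - 1 \<Longrightarrow> G y) \<Longrightarrow> G x"
    and q: "Q x"
  shows "G x"
proof -
  have "\<forall>x. Q x \<longrightarrow> f x \<le> real n \<longrightarrow> G x" for n
  proof (induction n)
    case 0
    show ?case
    proof (intro allI impI)
      fix x assume x: "Q x" "f x \<le> real 0"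
      show "G x"
      proof (rule step[OF x(1)])
        fix y assume "Q y" "f y \<le> f x - 1"
        then show "G y" using nn[of y] x(2) by simp
      qed
    qed
  next
    case (Suc n)
    show ?case
    proof (intro allI impI)
      fix x assume x: "Q x" "f x \<le> real (Suc n)"
      show "G x"
      proof (rule step[OF x(1)])
        fix y assume y: "Q y" "f y \<le> f x - 1"
        then have "f y \<le> real n" using x(2) by simp
        then show "G y" using Suc y(1) by blast
      qed
    qed
  qed
  moreover obtain n where "f x \<le> real n" using real_arch_simple by blast
  ultimately show ?thesis using q by blast
qed

context cnf begin

lemma P2:
  assumes sC: "\<sigma> \<in> C" and FC: "FanoC \<sigma>"
    and sR: "s \<in> R" and rR: "\<rho> \<in> R" and ss: "s \<notin> \<sigma>" and rs: "\<rho> \<notin> \<sigma>"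
    and isC: "insert s \<sigma> \<in> C" and irC: "insert \<rho> \<sigma> \<in> C" and nC: "insert s (insert \<rho> \<sigma>) \<notin> C"
  shows "\<rho> + s \<in> span \<sigma> \<or> (\<exists>r\<in>R. r \<notin> \<sigma> \<and> insert r \<sigma> \<in> C \<and> \<rho> + s - r \<in> span \<sigma>)"
proof -
  define p where "p = (\<Sum>t\<in>\<sigma>. (1::real) *\<^sub>R t)"
  obtain T e where T: "T \<in> C" "p \<in> pos_cone T" "e > 0" "p + e *\<^sub>R (\<rho> + s) \<in> pos_cone T"
    using local_cover by blast
  have sT: "\<sigma> \<subseteq> T" using support[OF sC T(1,2) p_def] by simp
  obtain \<mu> where mu: "maximal_cone C \<mu>" "T \<subseteq> \<mu>" using exists_max T(1) by blast
  have sm: "\<sigma> \<subseteq> \<mu>" using sT mu by auto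
  define w where "w = co \<mu> (\<rho> + s)"
  have pspan: "p \<in> span \<sigma>" unfolding p_def by (rule co_span_sum)
  have wnn: "w t \<ge> 0" if t: "t \<in> \<mu> - \<sigma>" for t
  proof -
    have q: "p + e *\<^sub>R (\<rho> + s) \<in> pos_cone \<mu>" using pos_cone_mono[OF max_fin[OF mu(1)] mu(2)] T(4) by blast
    have "co \<mu> (p + e *\<^sub>R (\<rho> + s)) t \<ge> 0" using mco_pos[OF mu(1) q] t by blast
    moreover have "co \<mu> (p + e *\<^sub>R (\<rho> + s)) t = co \<mu> p t + e * w t"
      unfolding w_def using mco_add[OF mu(1)] mco_scale[OF mu(1)] t by simp
    moreover have "co \<mu> p t = 0" using mco_span0[OF mu(1) sm pspan] t by blast
    ultimately have "e * w t \<ge> 0" by simp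
    then show ?thesis using T(3) by (simp add: zero_le_mult_iff)
  qed
  have wint: "w t \<in> \<int>" if t: "t \<in> \<mu>" for t
    unfolding w_def using mco_add[OF mu(1) t] ray_int[OF mu(1) rR t] ray_int[OF mu(1) sR t] by simp
  have fin: "finite (\<mu> - \<sigma>)" using max_fin[OF mu(1)] by simp
  have hb: "(\<Sum>t\<in>\<mu> - \<sigma>. co \<mu> x t) \<le> (if x \<in> \<mu> then 1 else 0)"
    if x: "x \<in> R" "insert x \<sigma> \<in> C" "x \<notin> \<sigma>" for x
  proof (cases "x \<in> \<mu>")
    case True
    have "(\<Sum>t\<in>\<mu> - \<sigma>. co \<mu> x t) = (\<Sum>t\<in>\<mu> - \<sigma>. if t = x then 1 else 0)"
      by (rule sum.cong) (use mco_basis[OF mu(1) True] in auto)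
    also have "\<dots> = 1" using fin True x(3) by simp
    finally show ?thesis using True by simp
  next
    case False
    then show ?thesis using FanoC_le0[OF FC mu(1) sm x(1,2) False] by simp
  qed
  have notboth: "\<not> (\<rho> \<in> \<mu> \<and> s \<in> \<mu>)"
  proof
    assume "\<rho> \<in> \<mu> \<and> s \<in> \<mu>"
    then have "insert s (insert \<rho> \<sigma>) \<subseteq> \<mu>" using sm by auto
    then show False using C_sub[OF max_C[OF mu(1)]] nC by blast
  qed
  have "(\<Sum>t\<in>\<mu> - \<sigma>. w t) = (\<Sum>t\<in>\<mu> - \<sigma>. co \<mu> \<rho> t) + (\<Sum>t\<in>\<mu> - \<sigma>. co \<mu> s t)"
    unfolding w_def by (simp add: mco_add[OF mu(1)] sum.distrib)
  then have W1: "(\<Sum>t\<in>\<mu> - \<sigma>. w t) \<le> 1"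
    using hb[OF rR irC rs] hb[OF sR isC ss] notboth by (auto split: if_splits)
  show ?thesis
  proof (cases "\<forall>t\<in>\<mu> - \<sigma>. w t = 0")
    case True
    then have "\<rho> + s \<in> span \<sigma>" using mco_in_span[OF mu(1) sm] unfolding w_def by blast
    then show ?thesis by simp
  next
    case False
    then obtain r where r: "r \<in> \<mu> - \<sigma>" "w r \<noteq> 0" by blast
    then have "w r > 0" using wnn[OF r(1)] by simp
    then have wr1: "w r \<ge> 1" using int_gt0 wint r(1) by blast
    have "(\<Sum>t\<in>\<mu> - \<sigma>. w t) = w r + (\<Sum>t\<in>\<mu> - \<sigma> - {r}. w t)" using sum.remove[OF fin r(1)] by simp
    moreover have "(\<Sum>t\<in>\<mu> - \<sigma> - {r}. w t) \<ge> 0" using wnn by (intro sum_nonneg) auto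
    ultimately have rest: "(\<Sum>t\<in>\<mu> - \<sigma> - {r}. w t) \<le> 0" and wr: "w r = 1" using W1 wr1 by linarith+
    have z: "\<And>t. t \<in> \<mu> - \<sigma> - {r} \<Longrightarrow> w t = 0"
      using sum_nonneg_zero[of "\<mu> - \<sigma> - {r}" w] rest wnn fin by auto
    have "\<rho> + s - r \<in> span \<sigma>"
    proof (rule mco_in_span[OF mu(1) sm], rule ballI)
      fix t assume t: "t \<in> \<mu> - \<sigma>"
      have "co \<mu> (\<rho> + s - r) t = w t - co \<mu> r t" unfolding w_def using mco_diff[OF mu(1)] t by simp
      also have "\<dots> = 0" using mco_basis[OF mu(1)] r(1) t z[of t] wr by (cases "t = r") auto
      finally show "co \<mu> (\<rho> + s - r) t = 0" .
    qed
    moreover have "r \<in> R" using r(1) CR max_C[OF mu(1)] by blast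
    moreover have "insert r \<sigma> \<in> C" using r(1) sm C_sub[OF max_C[OF mu(1)]] by blast
    ultimately show ?thesis using r(1) by blast
  qed
qed

end


context cnf begin

lemma negsum_nn: "negsum \<mu> \<sigma> v \<ge> 0" unfolding negsum_def by (intro sum_nonneg) auto

lemma ind_sum: "finite A \<Longrightarrow> (\<Sum>t\<in>A. if t = r then (1::real) else 0) \<le> 1"
  by (simp add: sum.delta')

lemma up_step:
  assumes mu: "maximal_cone C \<mu>" and FA: "\<forall>\<sigma>\<in>C. FanoC \<sigma>"
    and sm: "\<sigma> \<subseteq> \<mu>" and rR: "\<rho> \<in> R" and irC: "insert \<rho> \<sigma> \<in> C" and rmu: "\<rho> \<notin> \<mu>"
    and IH: "\<And>\<sigma>' r. \<sigma>' \<subseteq> \<mu> \<Longrightarrow> r \<in> R \<Longrightarrow> insert r \<sigma>' \<in> C \<Longrightarrow> r \<notin> \<mu> \<Longrightarrow>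
                negsum \<mu> \<sigma>' r \<le> negsum \<mu> \<sigma> \<rho> - 1 \<Longrightarrow> possum \<mu> \<sigma>' r \<le> 1"
  shows "possum \<mu> \<sigma> \<rho> \<le> 1"
proof -
  define b where "b = co \<mu> \<rho>"
  have bint: "\<And>t. t \<in> \<mu> \<Longrightarrow> b t \<in> \<int>" unfolding b_def using ray_int[OF mu rR] by blast
  define \<nu> where "\<nu> = {t\<in>\<mu> - \<sigma>. b t < 0}"
  define F where "F = {\<sigma>1. \<sigma> \<subseteq> \<sigma>1 \<and> \<sigma>1 \<subseteq> \<sigma> \<union> \<nu> \<and> insert \<rho> \<sigma>1 \<in> C}"
  have sF: "\<sigma> \<in> F" unfolding F_def using irC by auto
  have Fm: "\<And>X. X \<in> F \<Longrightarrow> X \<subseteq> \<mu>" unfolding F_def \<nu>_def using sm by auto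
  have bnd: "\<forall>y. y \<in> F \<longrightarrow> card y < card \<mu> + 1"
  proof (intro allI impI)
    fix y assume "y \<in> F"
    then have "card y \<le> card \<mu>" using Fm card_mono[OF max_fin[OF mu]] by blast
    then show "card y < card \<mu> + 1" by simp
  qed
  obtain \<sigma>1 where s1: "\<sigma>1 \<in> F" "\<And>X. X \<in> F \<Longrightarrow> card X \<le> card \<sigma>1"
    using Lattices_Big.ex_has_greatest_nat[of "\<lambda>X. X \<in> F" \<sigma> card, OF sF bnd] by blast
  have s1p: "\<sigma> \<subseteq> \<sigma>1" "\<sigma>1 \<subseteq> \<sigma> \<union> \<nu>" "insert \<rho> \<sigma>1 \<in> C" using s1(1) unfolding F_def by auto
  have s1m: "\<sigma>1 \<subseteq> \<mu>" using Fm s1(1) by blast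
  have s1C: "\<sigma>1 \<in> C" using C_sub[OF s1p(3)] by blast
  have fin: "finite (\<mu> - \<sigma>)" "finite (\<mu> - \<sigma>1)" using max_fin[OF mu] by auto
  have pos_eq: "possum \<mu> \<sigma>1 \<rho> = possum \<mu> \<sigma> \<rho>" unfolding possum_def
  proof (rule sum.mono_neutral_right[symmetric])
    show "finite (\<mu> - \<sigma>)" by (rule fin(1))
    show "\<mu> - \<sigma>1 \<subseteq> \<mu> - \<sigma>" using s1p by auto
    show "\<forall>i\<in>\<mu> - \<sigma> - (\<mu> - \<sigma>1). max (co \<mu> \<rho> i) 0 = 0" using s1p unfolding \<nu>_def b_def by auto
  qed
  have neg_le: "negsum \<mu> \<sigma>1 \<rho> \<le> negsum \<mu> \<sigma> \<rho>" unfolding negsum_def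
    by (rule sum_mono2[OF fin(1)]) (use s1p in auto)
  show ?thesis
  proof (cases "\<nu> \<subseteq> \<sigma>1")
    case True
    have nn: "\<forall>t\<in>\<mu> - \<sigma>1. b t \<ge> 0"
    proof
      fix t assume t: "t \<in> \<mu> - \<sigma>1"
      show "b t \<ge> 0"
      proof (rule ccontr)
        assume "\<not> b t \<ge> 0"
        then have "t \<in> \<nu>" using t s1p unfolding \<nu>_def by auto
        then show False using True t by blast
      qed
    qed
    have "(\<Sum>s\<in>\<mu> - \<sigma>1. co \<mu> \<rho> s) < 1" using FA s1C mu s1m rR s1p(3) rmu unfolding FanoC_def by blast
    moreover have "possum \<mu> \<sigma>1 \<rho> = (\<Sum>s\<in>\<mu> - \<sigma>1. co \<mu> \<rho> s)" unfolding possum_def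
      by (rule sum.cong) (use nn b_def in auto)
    ultimately show ?thesis using pos_eq by simp
  next
    case False
    then obtain s where s: "s \<in> \<nu>" "s \<notin> \<sigma>1" by blast
    have sm': "s \<in> \<mu> - \<sigma>" and bs: "b s < 0" using s unfolding \<nu>_def by auto
    have bs1: "b s \<le> -1" using int_lt0 bint sm' bs by blast
    have sR: "s \<in> R" using sm' CR max_C[OF mu] by blast
    have isC: "insert s \<sigma>1 \<in> C" using sm' s1m C_sub[OF max_C[OF mu]] by blast
    have rs: "\<rho> \<notin> \<sigma>1" using rmu s1m by blast
    have nC: "insert s (insert \<rho> \<sigma>1) \<notin> C"
    proof
      assume a: "insert s (insert \<rho> \<sigma>1) \<in> C"
      have "insert s \<sigma>1 \<in> F" unfolding F_def using s1p s a by (auto simp: insert_commute)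
      then have "card (insert s \<sigma>1) \<le> card \<sigma>1" using s1(2) by blast
      moreover have "finite \<sigma>1" using s1m max_fin[OF mu] finite_subset by blast
      ultimately show False using s(2) by simp
    qed
    have smu: "s \<in> \<mu> - \<sigma>1" using sm' s(2) by blast
    have cos: "\<And>t. t \<in> \<mu> \<Longrightarrow> co \<mu> s t = (if t = s then 1 else 0)" using mco_basis[OF mu] sm' by blast
    from P2[OF s1C _ sR rR s(2) rs isC s1p(3) nC] FA s1C
    have "\<rho> + s \<in> span \<sigma>1 \<or> (\<exists>r\<in>R. r \<notin> \<sigma>1 \<and> insert r \<sigma>1 \<in> C \<and> \<rho> + s - r \<in> span \<sigma>1)" by blast
    then show ?thesis
    proof
      assume sp: "\<rho> + s \<in> span \<sigma>1"
      have "\<forall>t\<in>\<mu> - \<sigma>1. max (co \<mu> \<rho> t) 0 = 0"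
      proof
        fix t assume t: "t \<in> \<mu> - \<sigma>1"
        have "co \<mu> (\<rho> + s) t = 0" using mco_span0[OF mu s1m sp] t by blast
        then have "co \<mu> \<rho> t = - co \<mu> s t" using mco_add[OF mu] t by simp
        then show "max (co \<mu> \<rho> t) 0 = 0" using cos t by simp
      qed
      then have "possum \<mu> \<sigma>1 \<rho> = 0" unfolding possum_def by simp
      then show ?thesis using pos_eq by simp
    next
      assume "\<exists>r\<in>R. r \<notin> \<sigma>1 \<and> insert r \<sigma>1 \<in> C \<and> \<rho> + s - r \<in> span \<sigma>1"
      then obtain r where r: "r \<in> R" "r \<notin> \<sigma>1" "insert r \<sigma>1 \<in> C" "\<rho> + s - r \<in> span \<sigma>1" by blast
      have cor: "co \<mu> r t = b t + (if t = s then 1 else 0)" if t: "t \<in> \<mu> - \<sigma>1" for t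
      proof -
        have "co \<mu> (\<rho> + s - r) t = 0" using mco_span0[OF mu s1m r(4)] t by blast
        then show ?thesis using mco_add[OF mu] mco_diff[OF mu] cos t unfolding b_def by simp
      qed
      show ?thesis
      proof (cases "r \<in> \<mu>")
        case True
        have "possum \<mu> \<sigma>1 \<rho> \<le> (\<Sum>t\<in>\<mu> - \<sigma>1. if t = r then 1 else 0)" unfolding possum_def
        proof (rule sum_mono)
          fix t assume t: "t \<in> \<mu> - \<sigma>1"
          have e1: "co \<mu> r t = (if t = r then 1 else 0)" using mco_basis[OF mu True] t by blast
          have c2: "co \<mu> \<rho> t = co \<mu> r t - (if t = s then 1 else 0)" using cor[OF t] b_def by simp
          show "max (co \<mu> \<rho> t) 0 \<le> (if t = r then 1 else 0)"
          proof (cases "t = r")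
            case True
            then show ?thesis using c2 e1 by (cases "t = s") simp_all
          next
            case False
            then show ?thesis using c2 e1 by (cases "t = s") simp_all
          qed
        qed
        also have "\<dots> \<le> 1" by (rule ind_sum[OF fin(2)])
        finally show ?thesis using pos_eq by simp
      next
        case False
        have "negsum \<mu> \<sigma>1 r = (\<Sum>t\<in>\<mu> - \<sigma>1. max (- co \<mu> \<rho> t) 0 - (if t = s then 1 else 0))"
          unfolding negsum_def
        proof (rule sum.cong)
          fix t assume t: "t \<in> \<mu> - \<sigma>1"
          have cr: "co \<mu> r t = co \<mu> \<rho> t + (if t = s then 1 else 0)" using cor[OF t] b_def by simp
          have bs1': "co \<mu> \<rho> s \<le> -1" using bs1 b_def by simp
          show "max (- co \<mu> r t) 0 = max (- co \<mu> \<rho> t) 0 - (if t = s then 1 else 0)"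
            using cr bs1' by (cases "t = s") auto
        qed simp
        also have "\<dots> = negsum \<mu> \<sigma>1 \<rho> - 1"
          unfolding negsum_def using smu fin(2) by (simp add: sum_subtractf)
        finally have "negsum \<mu> \<sigma>1 r \<le> negsum \<mu> \<sigma> \<rho> - 1" using neg_le by simp
        then have "possum \<mu> \<sigma>1 r \<le> 1" using IH[OF s1m r(1) r(3) False] by blast
        moreover have "possum \<mu> \<sigma>1 \<rho> \<le> possum \<mu> \<sigma>1 r" unfolding possum_def
        proof (rule sum_mono)
          fix t assume t: "t \<in> \<mu> - \<sigma>1"
          have "co \<mu> \<rho> t \<le> co \<mu> r t" using cor[OF t] b_def by simp
          then show "max (co \<mu> \<rho> t) 0 \<le> max (co \<mu> r t) 0" by simp
        qed
        ultimately show ?thesis using pos_eq by simp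
      qed
    qed
  qed
qed

lemma up_fano:
  assumes mu: "maximal_cone C \<mu>" and FA: "\<forall>\<sigma>\<in>C. FanoC \<sigma>"
    and q: "\<sigma> \<subseteq> \<mu>" "\<rho> \<in> R" "insert \<rho> \<sigma> \<in> C" "\<rho> \<notin> \<mu>"
  shows "possum \<mu> \<sigma> \<rho> \<le> 1"
proof -
  have "(\<lambda>(\<sigma>,\<rho>). possum \<mu> \<sigma> \<rho> \<le> 1) (\<sigma>, \<rho>)"
  proof (rule real_measure_induct[where f="\<lambda>(\<sigma>,\<rho>). negsum \<mu> \<sigma> \<rho>"
        and Q="\<lambda>(\<sigma>,\<rho>). \<sigma> \<subseteq> \<mu> \<and> \<rho> \<in> R \<and> insert \<rho> \<sigma> \<in> C \<and> \<rho> \<notin> \<mu>"])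
    show "\<And>y. (\<lambda>(\<sigma>,\<rho>). negsum \<mu> \<sigma> \<rho>) y \<ge> 0"
    proof -
      fix y :: "(real^'n) set \<times> (real^'n)"
      show "(\<lambda>(\<sigma>,\<rho>). negsum \<mu> \<sigma> \<rho>) y \<ge> 0" using negsum_nn by (cases y) simp
    qed
    show "(\<lambda>(\<sigma>,\<rho>). \<sigma> \<subseteq> \<mu> \<and> \<rho> \<in> R \<and> insert \<rho> \<sigma> \<in> C \<and> \<rho> \<notin> \<mu>) (\<sigma>, \<rho>)" using q by simp
    fix x assume Qx: "(\<lambda>(\<sigma>,\<rho>). \<sigma> \<subseteq> \<mu> \<and> \<rho> \<in> R \<and> insert \<rho> \<sigma> \<in> C \<and> \<rho> \<notin> \<mu>) x"
      and IH: "\<And>y. (\<lambda>(\<sigma>,\<rho>). \<sigma> \<subseteq> \<mu> \<and> \<rho> \<in> R \<and> insert \<rho> \<sigma> \<in> C \<and> \<rho> \<notin> \<mu>) y \<Longrightarrow>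
          (\<lambda>(\<sigma>,\<rho>). negsum \<mu> \<sigma> \<rho>) y \<le> (\<lambda>(\<sigma>,\<rho>). negsum \<mu> \<sigma> \<rho>) x - 1 \<Longrightarrow>
          (\<lambda>(\<sigma>,\<rho>). possum \<mu> \<sigma> \<rho> \<le> 1) y"
    obtain \<sigma>0 \<rho>0 where x: "x = (\<sigma>0, \<rho>0)" by (cases x)
    have "possum \<mu> \<sigma>0 \<rho>0 \<le> 1"
    proof (rule up_step[OF mu FA])
      show "\<sigma>0 \<subseteq> \<mu>" "\<rho>0 \<in> R" "insert \<rho>0 \<sigma>0 \<in> C" "\<rho>0 \<notin> \<mu>" using Qx x by auto
      fix \<sigma>' r assume "\<sigma>' \<subseteq> \<mu>" "r \<in> R" "insert r \<sigma>' \<in> C" "r \<notin> \<mu>" "negsum \<mu> \<sigma>' r \<le> negsum \<mu> \<sigma>0 \<rho>0 - 1"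
      then show "possum \<mu> \<sigma>' r \<le> 1" using IH[of "(\<sigma>', r)"] x by simp
    qed
    then show "(\<lambda>(\<sigma>,\<rho>). possum \<mu> \<sigma> \<rho> \<le> 1) x" using x by simp
  qed
  then show ?thesis by simp
qed

end


context cnf begin

lemma ii_step:
  assumes mu: "maximal_cone C \<mu>" and ii: "\<forall>P. primitive_set R C P \<longrightarrow> (\<Sum>P = 0 \<or> \<Sum>P \<in> R)"
    and rR: "\<rho> \<in> R" and rmu: "\<rho> \<notin> \<mu>"
    and IH: "\<And>r. r \<in> R \<Longrightarrow> r \<notin> \<mu> \<Longrightarrow> negsum \<mu> {} r \<le> negsum \<mu> {} \<rho> - 1 \<Longrightarrow> possum \<mu> {} r \<le> 1"
  shows "possum \<mu> {} \<rho> \<le> 1"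
proof -
  define b where "b = co \<mu> \<rho>"
  have bint: "\<And>t. t \<in> \<mu> \<Longrightarrow> b t \<in> \<int>" unfolding b_def using ray_int[OF mu rR] by blast
  define \<nu> where "\<nu> = {t\<in>\<mu>. b t < 0}"
  have nm: "\<nu> \<subseteq> \<mu>" unfolding \<nu>_def by auto
  have finm: "finite \<mu>" using max_fin[OF mu] .
  have finn: "finite \<nu>" using finite_subset[OF nm finm] .
  have rn: "\<rho> \<notin> \<nu>" using rmu nm by blast
  show ?thesis
  proof (cases "insert \<rho> \<nu> \<in> C")
    case True
    define z where "z = \<rho> + (\<Sum>t\<in>\<nu>. (- b t) *\<^sub>R t)"
    have coz: "co \<mu> z t = b t + (if t \<in> \<nu> then - b t else 0)" if t: "t \<in> \<mu>" for t
      unfolding z_def b_def using mco_add[OF mu t] mco_sub_sum[OF mu nm t, of "\<lambda>t. - co \<mu> \<rho> t"]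
      by (simp add: b_def)
    have zpos: "z \<in> pos_cone \<mu>"
    proof (rule mco_posI[OF mu], rule ballI)
      fix t assume t: "t \<in> \<mu>"
      show "co \<mu> z t \<ge> 0" using coz[OF t] t unfolding \<nu>_def by (cases "t \<in> \<nu>") (auto simp: \<nu>_def)
    qed
    have "z \<in> pos_cone (insert \<rho> \<nu>)" unfolding pos_cone_def
    proof (intro CollectI exI[of _ "\<lambda>u. if u = \<rho> then 1 else - b u"] conjI)
      show "\<forall>s\<in>insert \<rho> \<nu>. 0 \<le> (if s = \<rho> then 1 else - b s)" unfolding \<nu>_def by auto
      have "(\<Sum>s\<in>insert \<rho> \<nu>. (if s = \<rho> then 1 else - b s) *\<^sub>R s) = \<rho> + (\<Sum>s\<in>\<nu>. (if s = \<rho> then 1 else - b s) *\<^sub>R s)"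
        using sum.insert[OF finn rn, of "\<lambda>s. (if s = \<rho> then 1 else - b s) *\<^sub>R s"] by simp
      also have "(\<Sum>s\<in>\<nu>. (if s = \<rho> then 1 else - b s) *\<^sub>R s) = (\<Sum>s\<in>\<nu>. (- b s) *\<^sub>R s)"
        by (rule sum.cong) (use rn in auto)
      finally show "z = (\<Sum>s\<in>insert \<rho> \<nu>. (if s = \<rho> then 1 else - b s) *\<^sub>R s)" unfolding z_def by simp
    qed
    then have van: "\<And>t. t \<in> \<mu> \<Longrightarrow> t \<notin> \<nu> \<Longrightarrow> co \<mu> z t = 0"
      using vanish[OF max_C[OF mu] True zpos] rmu by auto
    have "possum \<mu> {} \<rho> = 0" unfolding possum_def
    proof (rule sum.neutral, rule ballI)
      fix t assume t: "t \<in> \<mu> - {}"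
      show "max (co \<mu> \<rho> t) 0 = 0"
      proof (cases "t \<in> \<nu>")
        case True then show ?thesis unfolding \<nu>_def b_def by auto
      next
        case False then show ?thesis using van[of t] coz[of t] t unfolding b_def by auto
      qed
    qed
    then show ?thesis by simp
  next
    case False
    have QR: "insert \<rho> \<nu> \<subseteq> R" using rR nm CR max_C[OF mu] by blast
    obtain P where P: "P \<subseteq> insert \<rho> \<nu>" "primitive_set R C P" using exists_primitive[OF QR False] by blast
    have PC: "P \<notin> C" using P(2) unfolding primitive_set_def by blast
    have rP: "\<rho> \<in> P"
    proof (rule ccontr)
      assume "\<rho> \<notin> P"
      then have "P \<subseteq> \<mu>" using P(1) nm by blast
      then show False using C_sub[OF max_C[OF mu]] PC by blast
    qed
    define P' where "P' = P - {\<rho>}"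
    have P'n: "P' \<subseteq> \<nu>" using P(1) unfolding P'_def by blast
    have P'm: "P' \<subseteq> \<mu>" using P'n nm by blast
    have P'ne: "P' \<noteq> {}"
    proof
      assume "P' = {}"
      then have "P = {\<rho>}" using rP unfolding P'_def by blast
      then show False using PC C_ray[OF rR] by simp
    qed
    have finP': "finite P'" using finite_subset[OF P'm finm] .
    have PP: "P = insert \<rho> P'" "\<rho> \<notin> P'" using rP unfolding P'_def by auto
    have sumP: "\<Sum>P = \<rho> + (\<Sum>t\<in>P'. (1::real) *\<^sub>R t)" using PP sum.insert[OF finP' PP(2), of "\<lambda>t. t"] by simp
    have coP: "co \<mu> (\<Sum>P) t = b t + (if t \<in> P' then 1 else 0)" if t: "t \<in> \<mu>" for t
      unfolding sumP b_def using mco_add[OF mu t] mco_sub_sum[OF mu P'm t, of "\<lambda>_. 1", simplified] by simp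
    have "\<Sum>P = 0 \<or> \<Sum>P \<in> R" using ii P(2) by blast
    then show ?thesis
    proof
      assume z: "\<Sum>P = 0"
      have "possum \<mu> {} \<rho> = 0" unfolding possum_def
      proof (rule sum.neutral, rule ballI)
        fix t assume t: "t \<in> \<mu> - {}"
        have "co \<mu> (\<Sum>P) t = 0" using z co_zero[OF finm max_indep[OF mu]] t by simp
        then have "b t \<le> 0" using coP[of t] t by (cases "t \<in> P'") auto
        then show "max (co \<mu> \<rho> t) 0 = 0" unfolding b_def by simp
      qed
      then show ?thesis by simp
    next
      assume rR': "\<Sum>P \<in> R"
      define r where "r = \<Sum>P"
      show ?thesis
      proof (cases "r \<in> \<mu>")
        case True
        have "possum \<mu> {} \<rho> \<le> (\<Sum>t\<in>\<mu> - {}. if t = r then 1 else 0)" unfolding possum_def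
        proof (rule sum_mono)
          fix t assume t: "t \<in> \<mu> - {}"
          have e1: "co \<mu> r t = (if t = r then 1 else 0)" using mco_basis[OF mu True] t by blast
          have c2: "co \<mu> \<rho> t = co \<mu> r t - (if t \<in> P' then 1 else 0)" using coP[of t] t b_def r_def by simp
          show "max (co \<mu> \<rho> t) 0 \<le> (if t = r then 1 else 0)"
          proof (cases "t = r")
            case True
            then show ?thesis using c2 e1 by (cases "t \<in> P'") simp_all
          next
            case False
            then show ?thesis using c2 e1 by (cases "t \<in> P'") simp_all
          qed
        qed
        also have "\<dots> \<le> 1" by (rule ind_sum) (use finm in simp)
        finally show ?thesis .
      next
        case False
        have cr: "co \<mu> r t = b t + (if t \<in> P' then 1 else 0)" if t: "t \<in> \<mu>" for t
          using coP[OF t] r_def by simp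
        have pw: "max (- co \<mu> r t) 0 = max (- b t) 0 - (if t \<in> P' then 1 else 0)" if t: "t \<in> \<mu>" for t
        proof (cases "t \<in> P'")
          case True
          then have "b t < 0" using P'n unfolding \<nu>_def by auto
          then have "b t \<le> -1" using int_lt0 bint t by blast
          then show ?thesis using cr[OF t] True by simp
        next
          case False
          then show ?thesis using cr[OF t] by simp
        qed
        obtain p0 where p0: "p0 \<in> P'" using P'ne by blast
        have "1 \<le> (\<Sum>t\<in>\<mu>. (if t \<in> P' then 1 else (0::real)))"
        proof -
          have "(if p0 \<in> P' then 1 else (0::real)) \<le> (\<Sum>t\<in>\<mu>. (if t \<in> P' then 1 else (0::real)))"
            by (rule member_le_sum) (use p0 P'm finm in auto)
          then show ?thesis using p0 by simp
        qed
        moreover have "negsum \<mu> {} r = negsum \<mu> {} \<rho> - (\<Sum>t\<in>\<mu>. (if t \<in> P' then 1 else (0::real)))"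
        proof -
          have "negsum \<mu> {} r = (\<Sum>t\<in>\<mu>. max (- b t) 0 - (if t \<in> P' then 1 else 0))"
            unfolding negsum_def by (rule sum.cong) (use pw in auto)
          also have "\<dots> = negsum \<mu> {} \<rho> - (\<Sum>t\<in>\<mu>. (if t \<in> P' then 1 else (0::real)))"
            unfolding negsum_def b_def by (simp add: sum_subtractf)
          finally show ?thesis .
        qed
        ultimately have "negsum \<mu> {} r \<le> negsum \<mu> {} \<rho> - 1" by simp
        then have "possum \<mu> {} r \<le> 1" using IH[OF _ False] rR' r_def by blast
        moreover have "possum \<mu> {} \<rho> \<le> possum \<mu> {} r" unfolding possum_def
        proof (rule sum_mono)
          fix t assume t: "t \<in> \<mu> - {}"
          have "co \<mu> \<rho> t \<le> co \<mu> r t" using cr[of t] t b_def by simp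
          then show "max (co \<mu> \<rho> t) 0 \<le> max (co \<mu> r t) 0" by simp
        qed
        ultimately show ?thesis by simp
      qed
    qed
  qed
qed

lemma ii_upper:
  assumes mu: "maximal_cone C \<mu>" and ii: "\<forall>P. primitive_set R C P \<longrightarrow> (\<Sum>P = 0 \<or> \<Sum>P \<in> R)"
    and q: "\<rho> \<in> R" "\<rho> \<notin> \<mu>"
  shows "possum \<mu> {} \<rho> \<le> 1"
proof (rule real_measure_induct[where f="\<lambda>r. negsum \<mu> {} r" and Q="\<lambda>r. r \<in> R \<and> r \<notin> \<mu>"])
  show "\<And>y. negsum \<mu> {} y \<ge> 0" by (rule negsum_nn)
  show "\<rho> \<in> R \<and> \<rho> \<notin> \<mu>" using q by simp
  fix x assume "x \<in> R \<and> x \<notin> \<mu>" and IH: "\<And>y. y \<in> R \<and> y \<notin> \<mu> \<Longrightarrow> negsum \<mu> {} y \<le> negsum \<mu> {} x - 1 \<Longrightarrow> possum \<mu> {} y \<le> 1"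
  then show "possum \<mu> {} x \<le> 1" using ii_step[OF mu ii] by blast
qed

end

theorem theorem3p1:
  fixes R :: "(real^'n) set" and C :: "(real^'n) set set"
  assumes "complete_nonsingular_fan R C"
  shows "((fano_fan R C \<and> (\<forall>\<sigma>\<in>C. fano_orbit_closure R C \<sigma>))
           \<longleftrightarrow> (\<forall>P. primitive_set R C P \<longrightarrow> (\<Sum>P = 0 \<or> \<Sum>P \<in> R)))
       \<and> ((\<forall>P. primitive_set R C P \<longrightarrow> (\<Sum>P = 0 \<or> \<Sum>P \<in> R))
           \<longleftrightarrow> (\<forall>\<mu> \<rho> b. maximal_cone C \<mu> \<and> \<rho> \<in> R \<and> \<rho> = (\<Sum>s\<in>\<mu>. b s *\<^sub>R s) \<longrightarrow>
                  (\<forall>s\<in>\<mu>. -1 \<le> b s \<and> b s \<le> 1) \<and> card {s\<in>\<mu>. b s = 1} \<le> 1))"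
proof -
  interpret cnf R C by (rule cnf.intro[OF assms])
  have I_iii: "(\<forall>\<mu> \<rho> b. maximal_cone C \<mu> \<and> \<rho> \<in> R \<and> \<rho> = (\<Sum>s\<in>\<mu>. b s *\<^sub>R s) \<longrightarrow>
                  (\<forall>s\<in>\<mu>. -1 \<le> b s \<and> b s \<le> 1) \<and> card {s\<in>\<mu>. b s = 1} \<le> 1)"
    if I: "fano_fan R C \<and> (\<forall>\<sigma>\<in>C. fano_orbit_closure R C \<sigma>)"
  proof (rule iii_from)
    have FA: "\<forall>\<sigma>\<in>C. FanoC \<sigma>" using I fano_FanoC by blast
    fix \<mu> \<rho> assume "maximal_cone C \<mu>" "\<rho> \<in> R" "\<rho> \<notin> \<mu>"
    then show "possum \<mu> {} \<rho> \<le> 1" using up_fano[OF _ FA] C_ray by simp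
  qed
  have iii_I: "fano_fan R C \<and> (\<forall>\<sigma>\<in>C. fano_orbit_closure R C \<sigma>)"
    if iii: "(\<forall>\<mu> \<rho> b. maximal_cone C \<mu> \<and> \<rho> \<in> R \<and> \<rho> = (\<Sum>s\<in>\<mu>. b s *\<^sub>R s) \<longrightarrow>
                  (\<forall>s\<in>\<mu>. -1 \<le> b s \<and> b s \<le> 1) \<and> card {s\<in>\<mu>. b s = 1} \<le> 1)"
  proof -
    have "III" using iii_III[OF iii] .
    then have "\<forall>\<sigma>\<in>C. fano_orbit_closure R C \<sigma>" using III_FanoC fano_FanoC by blast
    then show ?thesis unfolding fano_fan_def using C_empty by blast
  qed
  have ii_iii: "(\<forall>\<mu> \<rho> b. maximal_cone C \<mu> \<and> \<rho> \<in> R \<and> \<rho> = (\<Sum>s\<in>\<mu>. b s *\<^sub>R s) \<longrightarrow>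
                  (\<forall>s\<in>\<mu>. -1 \<le> b s \<and> b s \<le> 1) \<and> card {s\<in>\<mu>. b s = 1} \<le> 1)"
    if ii: "\<forall>P. primitive_set R C P \<longrightarrow> (\<Sum>P = 0 \<or> \<Sum>P \<in> R)"
    using iii_from ii_upper[OF _ ii] by blast
  have iii_ii: "\<forall>P. primitive_set R C P \<longrightarrow> (\<Sum>P = 0 \<or> \<Sum>P \<in> R)"
    if iii: "(\<forall>\<mu> \<rho> b. maximal_cone C \<mu> \<and> \<rho> \<in> R \<and> \<rho> = (\<Sum>s\<in>\<mu>. b s *\<^sub>R s) \<longrightarrow>
                  (\<forall>s\<in>\<mu>. -1 \<le> b s \<and> b s \<le> 1) \<and> card {s\<in>\<mu>. b s = 1} \<le> 1)"
    using III_ii[OF iii_III[OF iii]] by blast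
  show ?thesis using I_iii iii_I ii_iii iii_ii by blast
qed


end
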